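(* The restriction $W:\mathcal B\to C(\mathcal X)$ is continuous (with the $\mathcal H_c$-norm topology on $\mathcal B$ and the uniform topology on $C(\mathcal X)$). Moreover the graph $\{(b,p):b\in\mathcal B,\ p\in\tilde Pb\}$ is closed in $\mathcal H_c\times C(\mathcal X)$.
   Context: $(\mathcal X,\mathsf d)$ compact metric space; $\varepsilon>0$; $c\in C(\mathcal X\times\mathcal X)$ symmetric, nonnegative, with $k_c:=\exp(-c/\varepsilon)$ a positive definite universal kernel; $\mathcal H_c\subset C(\mathcal X)$ its RKHS and $H_c:\mathcal H_c^*\to\mathcal H_c$ the Riesz isomorphism, given on measures by $H_c[\sigma](y)=\int k_c(x,y)d\sigma(x)$; $H_c^{-1}$ on $H_c[\mathcal M(\mathcal X)]$ returns the measure. $\mathcal B:=H_c[\mathcal M_+(\mathcal X)]\cap\{b\in\mathcal H_c:\|b\|_{\mathcal H_c}=1\}$. $V\in C(\mathcal X)$. For $b\in H_c[\mathcal M(\mathcal X)]$: $Vb$ pointwise product, $V^*b:=H_c[V\,H_c^{-1}[b]]$, $W:=\frac2\varepsilon(V-V^* )$. For $b\in H_c[\mathcal M_+(\mathcal X)]$: $\tilde Pb:=\{p\in C(\mathcal X):p\le0,\ p=0\text{ on }\operatorname{supp}H_c^{-1}[b]\}$. *)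

theory Defs
  imports "HOL-Analysis.Analysis"
begin

text \<open>The compact metric space X is modelled as a type 'a whose UNIV is compact.
Kernels are functions k :: 'a => 'a => real.\<close>

definition kc :: "('a \<Rightarrow> 'a \<Rightarrow> real) \<Rightarrow> real \<Rightarrow> 'a \<Rightarrow> 'a \<Rightarrow> real" where
  "kc c eps = (\<lambda>x y. exp (- c x y / eps))"

definition csupp :: "('a \<Rightarrow> real) \<Rightarrow> 'a set" where
  "csupp a = {x. a x \<noteq> 0}"

definition fin_coeff :: "('a \<Rightarrow> real) \<Rightarrow> bool" where
  "fin_coeff a \<longleftrightarrow> finite (csupp a)"

definition kspan :: "('a \<Rightarrow> 'a \<Rightarrow> real) \<Rightarrow> ('a \<Rightarrow> real) \<Rightarrow> 'a \<Rightarrow> real" where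
  "kspan k a = (\<lambda>y. \<Sum>x\<in>csupp a. a x * k x y)"

definition prenorm2 :: "('a \<Rightarrow> 'a \<Rightarrow> real) \<Rightarrow> ('a \<Rightarrow> real) \<Rightarrow> real" where
  "prenorm2 k a = (\<Sum>x\<in>csupp a. \<Sum>y\<in>csupp a. a x * a y * k x y)"

definition pos_def_kernel :: "('a \<Rightarrow> 'a \<Rightarrow> real) \<Rightarrow> bool" where
  "pos_def_kernel k \<longleftrightarrow> (\<forall>a. fin_coeff a \<longrightarrow> a \<noteq> (\<lambda>_. 0) \<longrightarrow> prenorm2 k a > 0)"

definition universal_kernel :: "('a::topological_space \<Rightarrow> 'a \<Rightarrow> real) \<Rightarrow> bool" where
  "universal_kernel k \<longleftrightarrow>
     (\<forall>f. continuous_on UNIV f \<longrightarrow> (\<forall>e>0. \<exists>a. fin_coeff a \<and> (\<forall>y. \<bar>f y - kspan k a y\<bar> < e)))"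

text \<open>RKHS (Moore-Aronszajn construction): f belongs to the RKHS iff it is the pointwise
limit of a sequence of kernel sections which is Cauchy in the pre-Hilbert norm; the
RKHS norm is the limit of the pre-Hilbert norms.\<close>

definition rkhs_approx :: "('a \<Rightarrow> 'a \<Rightarrow> real) \<Rightarrow> ('a \<Rightarrow> real) \<Rightarrow> (nat \<Rightarrow> 'a \<Rightarrow> real) \<Rightarrow> bool" where
  "rkhs_approx k f a \<longleftrightarrow> (\<forall>n. fin_coeff (a n))
     \<and> (\<forall>e>0. \<exists>N. \<forall>m\<ge>N. \<forall>n\<ge>N. prenorm2 k (\<lambda>x. a m x - a n x) < e)
     \<and> (\<forall>y. (\<lambda>n. kspan k (a n) y) \<longlonglongrightarrow> f y)"

definition rkhs :: "('a \<Rightarrow> 'a \<Rightarrow> real) \<Rightarrow> ('a \<Rightarrow> real) set" where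
  "rkhs k = {f. \<exists>a. rkhs_approx k f a}"

definition rkhs_norm :: "('a \<Rightarrow> 'a \<Rightarrow> real) \<Rightarrow> ('a \<Rightarrow> real) \<Rightarrow> real" where
  "rkhs_norm k f = sqrt (THE L. \<exists>a. rkhs_approx k f a \<and> (\<lambda>n. prenorm2 k (a n)) \<longlonglongrightarrow> L)"

definition pos_meas :: "'a::topological_space measure \<Rightarrow> bool" where
  "pos_meas \<sigma> \<longleftrightarrow> finite_measure \<sigma> \<and> sets \<sigma> = sets borel"

definition Hc :: "('a \<Rightarrow> 'a \<Rightarrow> real) \<Rightarrow> 'a measure \<Rightarrow> 'a \<Rightarrow> real" where
  "Hc k \<sigma> = (\<lambda>y. \<integral>x. k x y \<partial>\<sigma>)"

definition Hc_inv :: "('a::topological_space \<Rightarrow> 'a \<Rightarrow> real) \<Rightarrow> ('a \<Rightarrow> real) \<Rightarrow> 'a measure" where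
  "Hc_inv k b = (THE \<sigma>. pos_meas \<sigma> \<and> b = Hc k \<sigma>)"

definition meas_supp :: "'a::metric_space measure \<Rightarrow> 'a set" where
  "meas_supp \<sigma> = {x. \<forall>r>0. emeasure \<sigma> (ball x r) > 0}"

definition Bset :: "('a::topological_space \<Rightarrow> 'a \<Rightarrow> real) \<Rightarrow> ('a \<Rightarrow> real) set" where
  "Bset k = {b. (\<exists>\<sigma>. pos_meas \<sigma> \<and> b = Hc k \<sigma>) \<and> b \<in> rkhs k \<and> rkhs_norm k b = 1}"

text \<open>V^* b = H_c[V H_c^{-1}[b]] and W = (2/eps)(V - V^*).\<close>

definition Vstar :: "('a::topological_space \<Rightarrow> 'a \<Rightarrow> real) \<Rightarrow> ('a \<Rightarrow> real) \<Rightarrow> ('a \<Rightarrow> real) \<Rightarrow> 'a \<Rightarrow> real" where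
  "Vstar k V b = (\<lambda>y. \<integral>x. V x * k x y \<partial>(Hc_inv k b))"

definition Wop :: "real \<Rightarrow> ('a::topological_space \<Rightarrow> 'a \<Rightarrow> real) \<Rightarrow> ('a \<Rightarrow> real) \<Rightarrow> ('a \<Rightarrow> real) \<Rightarrow> 'a \<Rightarrow> real" where
  "Wop eps k V b = (\<lambda>y. 2 / eps * (V y * b y - Vstar k V b y))"

definition Ptilde :: "('a::metric_space \<Rightarrow> 'a \<Rightarrow> real) \<Rightarrow> ('a \<Rightarrow> real) \<Rightarrow> ('a \<Rightarrow> real) set" where
  "Ptilde k b = {p. continuous_on UNIV p \<and> (\<forall>x. p x \<le> 0) \<and> (\<forall>x\<in>meas_supp (Hc_inv k b). p x = 0)}"

end

theory Submission
  imports Defs "HOL-Analysis.Analysis"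
begin


definition prec :: "('a::metric_space \<Rightarrow> real) \<Rightarrow> 'a set \<Rightarrow> bool" where
  "prec f U \<longleftrightarrow> continuous_on UNIV f \<and> (\<forall>x. 0 \<le> f x \<and> f x \<le> 1) \<and> closure {x. f x \<noteq> 0} \<subseteq> U"

locale rz =
  fixes L :: "('a::metric_space \<Rightarrow> real) \<Rightarrow> real"
  assumes cpt: "compact (UNIV :: 'a set)"
    and Ladd: "\<And>f g. continuous_on UNIV f \<Longrightarrow> continuous_on UNIV g \<Longrightarrow> L (\<lambda>x. f x + g x) = L f + L g"
    and Lscale: "\<And>f c. continuous_on UNIV f \<Longrightarrow> L (\<lambda>x. c * f x) = c * L f"
    and Lpos: "\<And>f. continuous_on UNIV f \<Longrightarrow> (\<And>x. f x \<ge> 0) \<Longrightarrow> L f \<ge> 0"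
begin

lemma Lminus: "continuous_on UNIV f \<Longrightarrow> continuous_on UNIV g \<Longrightarrow> L (\<lambda>x. f x - g x) = L f - L g"
proof -
  assume f: "continuous_on UNIV f" and g: "continuous_on UNIV g"
  have "L (\<lambda>x. f x - g x) = L (\<lambda>x. f x + (-1) * g x)" by simp
  also have "\<dots> = L f + L (\<lambda>x. (-1) * g x)" by (rule Ladd[OF f]) (auto intro: continuous_intros g)
  also have "\<dots> = L f - L g" using Lscale[OF g, of "-1"] by simp
  finally show ?thesis .
qed

lemma Lmono: "continuous_on UNIV f \<Longrightarrow> continuous_on UNIV g \<Longrightarrow> (\<And>x. f x \<le> g x) \<Longrightarrow> L f \<le> L g"
  using Lpos[of "\<lambda>x. g x - f x"] Lminus[of g f] by (auto intro: continuous_intros)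

lemma Lzero: "L (\<lambda>x. 0) = 0"
  using Lscale[of "\<lambda>x. 0" 0] by simp

definition "L1 = L (\<lambda>x. 1)"

lemma prec_bounds: "prec f U \<Longrightarrow> 0 \<le> L f \<and> L f \<le> L1"
  unfolding prec_def L1_def using Lpos[of f] Lmono[of f "\<lambda>x. 1"] by auto

definition nu :: "'a set \<Rightarrow> real" where
  "nu U = Sup {L f | f. prec f U}"

lemma prec_zero: "prec (\<lambda>x. 0) U"
  unfolding prec_def by auto

lemma nu_ge: "prec f U \<Longrightarrow> L f \<le> nu U"
  unfolding nu_def by (rule cSup_upper) (auto intro: bdd_aboveI[where M=L1] dest: prec_bounds)

lemma nu_le: "(\<And>f. prec f U \<Longrightarrow> L f \<le> c) \<Longrightarrow> nu U \<le> c"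
  unfolding nu_def by (rule cSup_least) (auto intro: prec_zero)

lemma nu_nonneg: "0 \<le> nu U"
  using nu_ge[OF prec_zero] Lzero by simp

lemma nu_L1: "nu U \<le> L1"
  by (rule nu_le) (simp add: prec_bounds)

lemma prec_mono: "prec f U \<Longrightarrow> U \<subseteq> V \<Longrightarrow> prec f V"
  unfolding prec_def by auto

lemma nu_mono: "U \<subseteq> V \<Longrightarrow> nu U \<le> nu V"
  by (rule nu_le) (auto intro: nu_ge prec_mono)

lemma nu_empty: "nu {} = 0"
proof -
  have "nu {} \<le> 0"
  proof (rule nu_le)
    fix f :: "'a \<Rightarrow> real" assume "prec f {}"
    then have "f = (\<lambda>x. 0)" unfolding prec_def using closure_subset by fastforce
    then show "L f \<le> 0" by (simp add: Lzero)
  qed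
  then show ?thesis using nu_nonneg[of "{}"] by simp
qed

lemma nu_UNIV: "nu UNIV = L1"
proof -
  have "prec (\<lambda>x. 1) UNIV" unfolding prec_def by auto
  then have "L1 \<le> nu UNIV" unfolding L1_def by (rule nu_ge)
  then show ?thesis using nu_L1[of UNIV] by simp
qed


lemma sep_fun:
  fixes A B :: "'b::metric_space set"
  assumes "closed A" "closed B" "A \<inter> B = {}" "A \<noteq> {}" "B \<noteq> {}"
  obtains h :: "'b \<Rightarrow> real" and OA OB :: "'b set" where "continuous_on UNIV h" "\<And>x. 0 \<le> h x \<and> h x \<le> 1"
    "open OA" "A \<subseteq> OA" "\<And>x. x \<in> OA \<Longrightarrow> h x = 0"
    "open OB" "B \<subseteq> OB" "\<And>x. x \<in> OB \<Longrightarrow> h x = 1"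
proof -
  have pos: "infdist x A + infdist x B > 0" for x
  proof -
    have "infdist x A \<ge> 0" "infdist x B \<ge> 0" by (auto intro: infdist_nonneg)
    moreover have "\<not> (infdist x A = 0 \<and> infdist x B = 0)"
      using in_closed_iff_infdist_zero[OF assms(1,4)] in_closed_iff_infdist_zero[OF assms(2,5)] assms(3) by auto
    ultimately show ?thesis by linarith
  qed
  define q where "q x = infdist x A / (infdist x A + infdist x B)" for x
  have qc: "continuous_on UNIV q" unfolding q_def
    apply (intro continuous_intros) using pos by (metis less_irrefl)
  define h where "h x = min 1 (max 0 (3 * q x - 1))" for x
  have hc: "continuous_on UNIV h" unfolding h_def by (intro continuous_intros qc)
  have qA: "x \<in> A \<Longrightarrow> q x = 0" for x unfolding q_def by simp
  have qB: "x \<in> B \<Longrightarrow> q x = 1" for x unfolding q_def using pos[of x] by simp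
  show ?thesis
  proof (rule that[of h "{x. q x < 1/3}" "{x. q x > 2/3}"])
    show "open {x. q x < 1/3}" by (rule open_Collect_less) (auto intro: qc continuous_intros)
    show "open {x. q x > 2/3}" by (rule open_Collect_less) (auto intro: qc continuous_intros)
  qed (use hc in \<open>auto simp: h_def qA qB\<close>)
qed

lemma nu_Un: assumes oU: "open U" and oV: "open V" shows "nu (U \<union> V) \<le> nu U + nu V"
proof (rule nu_le)
  fix f assume f: "prec f (U \<union> V)"
  define K where "K = closure {x. f x \<noteq> 0}"
  have fc: "continuous_on UNIV f" and f01: "\<And>x. 0 \<le> f x \<and> f x \<le> 1" and KUV: "K \<subseteq> U \<union> V"
    using f unfolding prec_def K_def by auto
  show "L f \<le> nu U + nu V"
  proof (cases "K - U = {} \<or> K - V = {}")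
    case True
    then have "prec f U \<or> prec f V" using f unfolding prec_def K_def by auto
    then show ?thesis using nu_ge[of f U] nu_ge[of f V] nu_nonneg[of U] nu_nonneg[of V] by auto
  next
    case False
    have cK: "closed K" unfolding K_def by simp
    have cA: "closed (K - V)" "closed (K - U)" using cK oU oV by (auto intro: closed_Diff)
    have disj: "(K - U) \<inter> (K - V) = {}" using KUV by blast
    have ne1: "K - U \<noteq> {}" and ne2: "K - V \<noteq> {}" using False by auto
    obtain h :: "'a \<Rightarrow> real" and OA OB where hc: "continuous_on UNIV h" and h01: "\<And>x. 0 \<le> h x \<and> h x \<le> 1"
      and oA: "open OA" "K - U \<subseteq> OA" "\<And>x. x \<in> OA \<Longrightarrow> h x = 0"
      and oB: "open OB" "K - V \<subseteq> OB" "\<And>x. x \<in> OB \<Longrightarrow> h x = 1"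
      using sep_fun[OF cA(2) cA(1) disj ne1 ne2] by metis
    have p1: "prec (\<lambda>x. f x * h x) U"
      unfolding prec_def
    proof (intro conjI allI)
      show "continuous_on UNIV (\<lambda>x. f x * h x)" by (intro continuous_intros fc hc)
      fix x show "0 \<le> f x * h x" using f01[of x] h01[of x] by simp
      show "f x * h x \<le> 1" using f01[of x] h01[of x] by (intro mult_le_one) simp_all
    next
      have "closure {x. f x * h x \<noteq> 0} \<subseteq> K \<inter> (- OA)"
      proof (rule closure_minimal)
        show "{x. f x * h x \<noteq> 0} \<subseteq> K \<inter> (- OA)"
        proof
          fix x assume "x \<in> {x. f x * h x \<noteq> 0}"
          then have "f x \<noteq> 0" "h x \<noteq> 0" by auto
          then show "x \<in> K \<inter> (- OA)" using oA(3)[of x] closure_subset[of "{x. f x \<noteq> 0}"] unfolding K_def by auto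
        qed
        show "closed (K \<inter> (- OA))" using cK oA(1) by (simp add: closed_Int open_closed)
      qed
      then show "closure {x. f x * h x \<noteq> 0} \<subseteq> U" using oA(2) by blast
    qed
    have p2: "prec (\<lambda>x. f x * (1 - h x)) V"
      unfolding prec_def
    proof (intro conjI allI)
      show "continuous_on UNIV (\<lambda>x. f x * (1 - h x))" by (intro continuous_intros fc hc)
      fix x show "0 \<le> f x * (1 - h x)" using f01[of x] h01[of x] by simp
      show "f x * (1 - h x) \<le> 1" using f01[of x] h01[of x] by (intro mult_le_one) simp_all
    next
      have "closure {x. f x * (1 - h x) \<noteq> 0} \<subseteq> K \<inter> (- OB)"
      proof (rule closure_minimal)
        show "{x. f x * (1 - h x) \<noteq> 0} \<subseteq> K \<inter> (- OB)"
        proof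
          fix x assume "x \<in> {x. f x * (1 - h x) \<noteq> 0}"
          then have "f x \<noteq> 0" "(1 - h x) \<noteq> 0" by auto
          then show "x \<in> K \<inter> (- OB)" using oB(3)[of x] closure_subset[of "{x. f x \<noteq> 0}"] unfolding K_def by auto
        qed
        show "closed (K \<inter> (- OB))" using cK oB(1) by (simp add: closed_Int open_closed)
      qed
      then show "closure {x. f x * (1 - h x) \<noteq> 0} \<subseteq> V" using oB(2) by blast
    qed
    have "(\<lambda>x. f x * h x + f x * (1 - h x)) = f" by (simp add: right_diff_distrib)
    then have "L f = L (\<lambda>x. f x * h x + f x * (1 - h x))" by simp
    also have "\<dots> = L (\<lambda>x. f x * h x) + L (\<lambda>x. f x * (1 - h x))"
      by (rule Ladd) (intro continuous_intros fc hc)+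
    also have "\<dots> \<le> nu U + nu V" using nu_ge[OF p1] nu_ge[OF p2] by simp
    finally show ?thesis .
  qed
qed


lemma nu_finite: assumes "\<And>i. open (U i)" shows "nu (\<Union>i<(n::nat). U i) \<le> (\<Sum>i<n. nu (U i))"
proof (induction n)
  case 0 then show ?case by (simp add: nu_empty)
next
  case (Suc n)
  have "(\<Union>i<Suc n. U i) = (\<Union>i<n. U i) \<union> U n" by (auto simp: lessThan_Suc)
  have o: "open (\<Union>i<n. U i)" using assms by auto
  have "nu (\<Union>i<Suc n. U i) \<le> nu (\<Union>i<n. U i) + nu (U n)"
    unfolding \<open>(\<Union>i<Suc n. U i) = (\<Union>i<n. U i) \<union> U n\<close> by (rule nu_Un[OF o assms])
  then show ?case using Suc by simp
qed

lemma prec_finite: fixes U :: "nat \<Rightarrow> 'a set" assumes "\<And>i. open (U i)" "prec f (\<Union>i. U i)" shows "\<exists>n. prec f (\<Union>i<n. U i)"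
proof -
  define K where "K = closure {x. f x \<noteq> 0}"
  have "compact K" unfolding K_def using compact_Int_closed[OF cpt closed_closure, of "{x. f x \<noteq> 0}"] by simp
  moreover have "K \<subseteq> (\<Union>i\<in>UNIV. U i)" using assms(2) unfolding prec_def K_def by auto
  ultimately have "\<exists>C. finite C \<and> K \<subseteq> (\<Union>i\<in>C. U i)"
    apply -
    apply (erule compactE_image[of K UNIV U])
    using assms(1) apply simp
     apply simp
    apply blast
    done
  then obtain C where C: "finite C" "K \<subseteq> (\<Union>i\<in>C. U i)" by blast
  obtain n where "C \<subseteq> {..<n}" using finite_nat_bounded[OF C(1)] by blast
  then have "K \<subseteq> (\<Union>i<n. U i)" using C(2) by blast
  then show ?thesis using assms(2) unfolding prec_def K_def by blast
qed

lemma nu_countable: assumes "\<And>i. open (U i)"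
  shows "ennreal (nu (\<Union>i. U i)) \<le> (\<Sum>i. ennreal (nu (U i)))"
proof (cases "(\<Sum>i. ennreal (nu (U i))) = top")
  case True then show ?thesis by simp
next
  case False
  have s: "summable (\<lambda>i. nu (U i))" using summable_suminf_not_top[OF nu_nonneg False] .
  have "nu (\<Union>i. U i) \<le> (\<Sum>i. nu (U i))"
  proof (rule nu_le)
    fix f assume "prec f (\<Union>i. U i)"
    then obtain n where "prec f (\<Union>i<n. U i)" using prec_finite assms by blast
    then have "L f \<le> nu (\<Union>i<n. U i)" by (rule nu_ge)
    also have "\<dots> \<le> (\<Sum>i<n. nu (U i))" by (rule nu_finite[OF assms])
    also have "\<dots> \<le> (\<Sum>i. nu (U i))" by (rule sum_le_suminf[OF s]) (auto simp: nu_nonneg)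
    finally show "L f \<le> (\<Sum>i. nu (U i))" .
  qed
  then show ?thesis using suminf_ennreal[OF nu_nonneg False] by (simp add: ennreal_leI)
qed

definition muR :: "'a set \<Rightarrow> real" where
  "muR E = Inf {nu U | U. open U \<and> E \<subseteq> U}"

lemma muR_le: "open U \<Longrightarrow> E \<subseteq> U \<Longrightarrow> muR E \<le> nu U"
  unfolding muR_def by (rule cInf_lower) (auto intro: bdd_belowI[where m=0] nu_nonneg)

lemma muR_ge: "(\<And>U. open U \<Longrightarrow> E \<subseteq> U \<Longrightarrow> c \<le> nu U) \<Longrightarrow> c \<le> muR E"
  unfolding muR_def by (rule cInf_greatest) auto

lemma muR_nonneg: "0 \<le> muR E"
  by (rule muR_ge) (simp add: nu_nonneg)

lemma muR_open: "open U \<Longrightarrow> muR U = nu U"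
  using muR_le[of U U] muR_ge[of U "nu U"] nu_mono by (auto intro: antisym)

lemma muR_mono: "E \<subseteq> F \<Longrightarrow> muR E \<le> muR F"
  by (rule muR_ge) (auto intro: muR_le)

lemma muR_empty: "muR {} = 0"
  using muR_le[of "{}" "{}"] nu_empty muR_nonneg[of "{}"] by simp

lemma muR_approx: assumes "e > 0" obtains U where "open U" "E \<subseteq> U" "nu U < muR E + e"
proof -
  have "\<exists>U. open U \<and> E \<subseteq> U \<and> nu U < muR E + e"
  proof (rule ccontr)
    assume "\<not> (\<exists>U. open U \<and> E \<subseteq> U \<and> nu U < muR E + e)"
    then have "\<And>U. open U \<Longrightarrow> E \<subseteq> U \<Longrightarrow> muR E + e \<le> nu U" by (meson not_less)
    then have "muR E + e \<le> muR E" by (rule muR_ge)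
    then show False using assms by simp
  qed
  then show ?thesis using that by blast
qed

lemma muR_countable: "ennreal (muR (\<Union>i. A i)) \<le> (\<Sum>i. ennreal (muR (A i)))"
proof (rule ennreal_le_epsilon)
  fix e :: real assume e: "0 < e" "(\<Sum>i. ennreal (muR (A i))) < top"
  have "\<exists>U. open U \<and> A n \<subseteq> U \<and> nu U < muR (A n) + e * (1/2)^Suc n" for n
    using muR_approx[of "e * (1/2)^Suc n" "A n"] e by auto
  then obtain U where U: "\<And>n. open (U n)" "\<And>n. A n \<subseteq> U n" "\<And>n. nu (U n) < muR (A n) + e * (1/2)^Suc n"
    by metis
  have "ennreal (muR (\<Union>i. A i)) \<le> ennreal (nu (\<Union>i. U i))"
    using muR_le[of "\<Union>i. U i" "\<Union>i. A i"] U by (auto intro!: ennreal_leI open_UN)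
  also have "\<dots> \<le> (\<Sum>i. ennreal (nu (U i)))" by (rule nu_countable[OF U(1)])
  also have "\<dots> \<le> (\<Sum>n. ennreal (muR (A n)) + ennreal e * ennreal ((1/2) ^ Suc n))"
  proof (rule suminf_le)
    fix n
    have "ennreal (nu (U n)) \<le> ennreal (muR (A n) + e * (1/2)^Suc n)"
      using U(3)[of n] by (intro ennreal_leI) simp
    also have "\<dots> = ennreal (muR (A n)) + ennreal e * ennreal ((1/2) ^ Suc n)"
      using e muR_nonneg[of "A n"] by (subst ennreal_mult[symmetric]) (auto intro!: ennreal_plus)
    finally show "ennreal (nu (U n)) \<le> ennreal (muR (A n)) + ennreal e * ennreal ((1/2) ^ Suc n)" .
  qed auto
  also have "\<dots> = (\<Sum>n. ennreal (muR (A n))) + (\<Sum>n. ennreal e * ennreal ((1/2) ^ Suc n))"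
    by (subst suminf_add[symmetric]) auto
  also have "\<dots> = (\<Sum>n. ennreal (muR (A n))) + e"
    unfolding ennreal_suminf_cmult
    by (subst suminf_ennreal_eq[OF zero_le_power power_half_series]) auto
  finally show "ennreal (muR (\<Union>i. A i)) \<le> (\<Sum>i. ennreal (muR (A i))) + ennreal e" .
qed


end

context rz begin

lemma nu_approx: assumes "e > 0" obtains f where "prec f W" "nu W - e < L f"
proof -
  have "\<exists>f. prec f W \<and> nu W - e < L f"
  proof (rule ccontr)
    assume "\<not> (\<exists>f. prec f W \<and> nu W - e < L f)"
    then have "\<And>f. prec f W \<Longrightarrow> L f \<le> nu W - e" by (meson not_less)
    then have "nu W \<le> nu W - e" by (rule nu_le)
    then show False using assms by simp
  qed
  then show ?thesis using that by blast
qed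

lemma muR_Un: "muR (A \<union> B) \<le> muR A + muR B"
proof (rule field_le_epsilon)
  fix e :: real assume e: "0 < e"
  obtain U where U: "open U" "A \<subseteq> U" "nu U < muR A + e/2" using muR_approx[of "e/2" A] e by auto
  obtain V where V: "open V" "B \<subseteq> V" "nu V < muR B + e/2" using muR_approx[of "e/2" B] e by auto
  have "muR (A \<union> B) \<le> nu (U \<union> V)" using U V by (intro muR_le) auto
  also have "\<dots> \<le> nu U + nu V" using U V by (intro nu_Un) auto
  finally show "muR (A \<union> B) \<le> muR A + muR B + e" using U V by simp
qed

lemma muR_split: assumes oU: "open U" shows "muR (E \<inter> U) + muR (E - U) \<le> muR E"
proof (rule field_le_epsilon)
  fix e :: real assume e0: "0 < e"
  define d where "d = e / 3"
  have e: "d > 0" using e0 unfolding d_def by simp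
  obtain V where V: "open V" "E \<subseteq> V" "nu V < muR E + d" using muR_approx[of d E] e by auto
  obtain f where f: "prec f (V \<inter> U)" "nu (V \<inter> U) - d < L f" using nu_approx[of d "V \<inter> U"] e by auto
  define K where "K = closure {x. f x \<noteq> 0}"
  have cK: "closed K" unfolding K_def by simp
  have KVU: "K \<subseteq> V \<inter> U" using f(1) unfolding prec_def K_def by auto
  have oW: "open (V - K)" using V(1) cK by (auto intro: open_Diff)
  obtain g where g: "prec g (V - K)" "nu (V - K) - d < L g" using nu_approx[of d "V - K"] e by auto
  have fc: "continuous_on UNIV f" and f01: "\<And>x. 0 \<le> f x \<and> f x \<le> 1"
    using f(1) unfolding prec_def by auto
  have gc: "continuous_on UNIV g" and g01: "\<And>x. 0 \<le> g x \<and> g x \<le> 1"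
    and gs: "closure {x. g x \<noteq> 0} \<subseteq> V - K"
    using g(1) unfolding prec_def by auto
  have fg: "prec (\<lambda>x. f x + g x) V"
    unfolding prec_def
  proof (intro conjI allI)
    show "continuous_on UNIV (\<lambda>x. f x + g x)" by (intro continuous_intros fc gc)
    fix x
    show "0 \<le> f x + g x" using f01[of x] g01[of x] by linarith
    show "f x + g x \<le> 1"
    proof (cases "g x = 0")
      case True then show ?thesis using f01[of x] by simp
    next
      case False
      then have "x \<in> closure {x. g x \<noteq> 0}" using closure_subset[of "{x. g x \<noteq> 0}"] by blast
      then have "x \<notin> K" using gs by blast
      then have "f x = 0" unfolding K_def using closure_subset[of "{x. f x \<noteq> 0}"] by blast
      then show ?thesis using g01[of x] by simp
    qed
  next
    have "{x. f x + g x \<noteq> 0} \<subseteq> {x. f x \<noteq> 0} \<union> {x. g x \<noteq> 0}" by auto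
    then have "closure {x. f x + g x \<noteq> 0} \<subseteq> closure ({x. f x \<noteq> 0} \<union> {x. g x \<noteq> 0})"
      by (rule closure_mono)
    also have "\<dots> = K \<union> closure {x. g x \<noteq> 0}" unfolding K_def by (rule closure_Un)
    also have "\<dots> \<subseteq> V" using KVU gs by blast
    finally show "closure {x. f x + g x \<noteq> 0} \<subseteq> V" .
  qed
  have "muR (E \<inter> U) \<le> nu (V \<inter> U)" using V oU by (intro muR_le) auto
  moreover have "muR (E - U) \<le> nu (V - K)" using V KVU oW by (intro muR_le) auto
  moreover have "L f + L g \<le> nu V" using nu_ge[OF fg] Ladd[OF fc gc] by simp
  ultimately show "muR (E \<inter> U) + muR (E - U) \<le> muR E + e" using f(2) g(2) V(3) unfolding d_def by linarith
qed

definition muo :: "'a set \<Rightarrow> ennreal" where "muo E = ennreal (muR E)"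

lemma muo_oms: "outer_measure_space (Pow UNIV) muo"
  unfolding outer_measure_space_def
proof (intro conjI)
  show "positive (Pow UNIV) muo" unfolding positive_def muo_def by (simp add: muR_empty)
  show "increasing (Pow UNIV) muo" unfolding increasing_def muo_def by (auto intro: ennreal_leI muR_mono)
  show "countably_subadditive (Pow UNIV) muo" unfolding countably_subadditive_def muo_def
    using muR_countable by auto
qed

lemma open_lambda: assumes "open U" shows "U \<in> lambda_system UNIV (Pow UNIV) muo"
  unfolding lambda_system_def
proof (intro CollectI conjI ballI)
  show "U \<in> Pow UNIV" by simp
  fix x :: "'a set"
  have "x = (U \<inter> x) \<union> ((UNIV - U) \<inter> x)" by blast
  then have le: "muR x \<le> muR (U \<inter> x) + muR ((UNIV - U) \<inter> x)" by (metis muR_Un)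
  have "(U \<inter> x) = x \<inter> U" "(UNIV - U) \<inter> x = x - U" by auto
  then have ge: "muR (U \<inter> x) + muR ((UNIV - U) \<inter> x) \<le> muR x" using muR_split[OF assms, of x] by simp
  show "muo (U \<inter> x) + muo ((UNIV - U) \<inter> x) = muo x"
    unfolding muo_def using le ge muR_nonneg by (simp add: ennreal_plus[symmetric] del: ennreal_plus)
qed

definition MM :: "'a measure" where "MM = measure_of UNIV (sets borel) muo"

lemma MM_facts: "sets MM = sets borel" "space MM = UNIV" "\<And>A. A \<in> sets borel \<Longrightarrow> emeasure MM A = muo A"
proof -
  have ms: "measure_space UNIV (lambda_system UNIV (Pow UNIV) muo) muo"
    by (rule sigma_algebra.caratheodory_lemma[OF sigma_algebra_Pow muo_oms])
  then have sa: "sigma_algebra UNIV (lambda_system UNIV (Pow UNIV) muo)" by (simp add: measure_space_def)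
  have "sigma_sets UNIV {S. open S} \<subseteq> lambda_system UNIV (Pow UNIV) muo"
    using open_lambda by (intro sigma_algebra.sigma_sets_subset[OF sa]) auto
  then have sub: "sets borel \<subseteq> lambda_system UNIV (Pow UNIV) muo" by (simp add: sets_borel)
  have sab: "sigma_algebra UNIV (sets borel)" using sets.sigma_algebra_axioms[of borel] by simp
  have msb: "measure_space UNIV (sets borel) muo" by (rule measure_down[OF ms sab sub])
  show "sets MM = sets borel" unfolding MM_def using sigma_algebra.sigma_sets_eq[OF sab] by (simp add: sets_measure_of_conv)
  show "space MM = UNIV" unfolding MM_def by (simp add: space_measure_of_conv)
  fix A :: "'a set" assume "A \<in> sets borel"
  then show "emeasure MM A = muo A" unfolding MM_def
    using msb by (intro emeasure_measure_of_sigma[OF sab]) (auto simp: measure_space_def)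
qed

lemma MM_finite: "finite_measure MM"
  by (rule finite_measureI) (simp add: MM_facts muo_def)

lemma MM_open: "open U \<Longrightarrow> measure MM U = nu U"
  using MM_facts(3)[of U] by (simp add: measure_def muo_def muR_open nu_nonneg)

lemma MM_UNIV: "measure MM UNIV = L1"
  using MM_open[of UNIV] nu_UNIV by simp

end


lemma cont_bounded:
  fixes g :: "'a::metric_space \<Rightarrow> real"
  assumes "compact (UNIV :: 'a set)" "continuous_on UNIV g"
  obtains B where "\<And>x. \<bar>g x\<bar> \<le> B"
proof -
  have "compact (g ` UNIV)" by (rule compact_continuous_image[OF assms(2) assms(1)])
  then have "bounded (g ` UNIV)" by (rule compact_imp_bounded)
  then obtain B where "\<forall>y\<in>g ` UNIV. norm y \<le> B" unfolding bounded_iff by blast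
  then show ?thesis using that by auto
qed

lemma cont_integrable:
  fixes g :: "'a::metric_space \<Rightarrow> real"
  assumes "compact (UNIV :: 'a set)" "finite_measure M" "sets M = sets borel" "continuous_on UNIV g"
  shows "integrable M g"
proof -
  obtain B where B: "\<And>x. \<bar>g x\<bar> \<le> B" using cont_bounded assms(1,4) by blast
  have "g \<in> borel_measurable M"
    by (subst measurable_cong_sets[OF assms(3) refl]) (rule borel_measurable_continuous_onI[OF assms(4)])
  then show ?thesis using B by (intro finite_measure.integrable_const_bound[OF assms(2), of _ B]) auto
qed

lemma step_sum:
  fixes h t :: real assumes "h > 0" "0 \<le> t"
  shows "(\<Sum>j<n. min (max (t - real j * h) 0) h) = min t (real n * h)"
proof (induction n)
  case 0 then show ?case using assms by simp
next
  case (Suc n)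
  have "min t (real n * h) + min (max (t - real n * h) 0) h = min t (real (Suc n) * h)"
    using assms by (auto simp: min_def max_def algebra_simps)
  then show ?case using Suc by simp
qed

context rz begin

lemma L_sum: "finite S \<Longrightarrow> (\<And>j. j \<in> S \<Longrightarrow> continuous_on UNIV (f j)) \<Longrightarrow> L (\<lambda>x. \<Sum>j\<in>S. f j x) = (\<Sum>j\<in>S. L (f j))"
proof (induction S rule: finite_induct)
  case empty then show ?case by (simp add: Lzero)
next
  case (insert a S)
  have "L (\<lambda>x. \<Sum>j\<in>insert a S. f j x) = L (\<lambda>x. f a x + (\<Sum>j\<in>S. f j x))"
    using insert by simp
  also have "\<dots> = L (f a) + L (\<lambda>x. \<Sum>j\<in>S. f j x)"
    using insert by (intro Ladd) (auto intro!: continuous_on_sum)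
  finally show ?case using insert by simp
qed

lemma MM_integrable: "continuous_on UNIV (g :: 'a \<Rightarrow> real) \<Longrightarrow> integrable MM g"
  by (rule cont_integrable[OF cpt MM_finite MM_facts(1)])

lemma L_le_int_nonneg:
  assumes gc: "continuous_on UNIV g" and g0: "\<And>x. 0 \<le> g x"
  shows "L g \<le> integral\<^sup>L MM g"
proof (rule field_le_epsilon)
  fix e :: real assume e: "e > 0"
  define h where "h = e / (2 * L1 + 1)"
  have L10: "L1 \<ge> 0" using nu_L1 nu_nonneg by (meson order_trans)
  have h0: "h > 0" unfolding h_def using e L10 by simp
  have he: "2 * h * L1 \<le> e" unfolding h_def using e L10 by (simp add: field_simps)
  obtain B where B: "\<And>x. \<bar>g x\<bar> \<le> B" using cont_bounded cpt gc by blast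
  obtain N :: nat where N: "B / h \<le> real N" using real_arch_simple by blast
  have gN: "g x \<le> real N * h" for x using B[of x] N h0 by (simp add: field_simps)
  define gj where "gj j x = min (max (g x - real j * h) 0) h" for j :: nat and x
  have gjc: "continuous_on UNIV (gj j)" for j unfolding gj_def by (intro continuous_intros gc)
  have gsum: "g x = (\<Sum>j<N. gj j x)" for x
    unfolding gj_def using step_sum[OF h0 g0[of x], of N] gN[of x] by simp
  define a where "a t = nu {x. g x > t}" for t
  have oa: "open {x. g x > t}" for t by (rule open_Collect_less) (auto intro: gc continuous_intros)
  have Lj: "L (gj j) \<le> h * a ((real j - 1) * h)" for j
  proof -
    have pr: "prec (\<lambda>x. (1/h) * gj j x) {x. g x > (real j - 1) * h}"
      unfolding prec_def
    proof (intro conjI allI)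
      show "continuous_on UNIV (\<lambda>x. (1/h) * gj j x)" by (intro continuous_intros gjc)
      fix x show "0 \<le> (1/h) * gj j x" "(1/h) * gj j x \<le> 1" unfolding gj_def using h0 by (auto simp: field_simps)
    next
      have "closure {x. (1/h) * gj j x \<noteq> 0} \<subseteq> {x. g x \<ge> real j * h}"
      proof (rule closure_minimal)
        show "{x. (1/h) * gj j x \<noteq> 0} \<subseteq> {x. g x \<ge> real j * h}" unfolding gj_def using h0 by (auto simp: min_def max_def)
        show "closed {x. g x \<ge> real j * h}" by (rule closed_Collect_le) (auto intro: gc continuous_intros)
      qed
      also have "\<dots> \<subseteq> {x. g x > (real j - 1) * h}" using h0 by (auto simp: algebra_simps)
      finally show "closure {x. (1/h) * gj j x \<noteq> 0} \<subseteq> {x. g x > (real j - 1) * h}" .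
    qed
    have "L (\<lambda>x. (1/h) * gj j x) = (1/h) * L (gj j)" by (rule Lscale[OF gjc])
    then have "(1/h) * L (gj j) \<le> a ((real j - 1) * h)"
      using nu_ge[OF pr] unfolding a_def by simp
    then show ?thesis using h0 by (simp add: field_simps)
  qed
  have Ij: "h * a ((real j + 1) * h) \<le> integral\<^sup>L MM (gj j)" for j
  proof -
    have "h * a ((real j + 1) * h) = integral\<^sup>L MM (\<lambda>x. h * indicator {x. g x > (real j + 1) * h} x)"
      unfolding a_def using MM_open[OF oa] by (simp add: MM_facts)
    also have "\<dots> \<le> integral\<^sup>L MM (gj j)"
    proof (rule integral_mono)
      show "integrable MM (gj j)" by (rule MM_integrable[OF gjc])
      have "{x. g x > (real j + 1) * h} \<in> sets MM" using oa by (simp add: MM_facts)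
      then show "integrable MM (\<lambda>x. h * indicator {x. g x > (real j + 1) * h} x)"
        by (intro integrable_mult_right integrable_real_indicator) (auto simp: less_top[symmetric] finite_measure.emeasure_finite[OF MM_finite])
      fix x show "h * indicator {x. g x > (real j + 1) * h} x \<le> gj j x"
        unfolding gj_def using h0 g0[of x] by (auto simp: indicator_def min_def max_def algebra_simps)
    qed
    finally show ?thesis .
  qed
  have a_bd: "0 \<le> a t \<and> a t \<le> L1" for t unfolding a_def using nu_nonneg nu_L1 by auto
  define b where "b j = a ((real j - 1) * h)" for j :: nat
  have "L g = (\<Sum>j<N. L (gj j))"
    using L_sum[of "{..<N}" gj] gjc gsum by (simp add: gsum[abs_def])
  also have "\<dots> \<le> (\<Sum>j<N. h * b j)" unfolding b_def by (intro sum_mono Lj)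
  also have "\<dots> \<le> integral\<^sup>L MM g + e"
  proof -
    have bj: "h * b (Suc (Suc j)) \<le> integral\<^sup>L MM (gj j)" for j
    proof -
      have "real (Suc (Suc j)) - 1 = real j + 1" by simp
      then have "b (Suc (Suc j)) = a ((real j + 1) * h)" unfolding b_def by (simp add: add.commute)
      then show ?thesis using Ij[of j] by simp
    qed
    have "(\<Sum>j<N. h * b (Suc (Suc j))) \<le> (\<Sum>j<N. integral\<^sup>L MM (gj j))"
      by (intro sum_mono bj)
    also have "\<dots> = integral\<^sup>L MM g"
    proof -
      have "integral\<^sup>L MM (\<lambda>x. \<Sum>j<N. gj j x) = (\<Sum>j<N. integral\<^sup>L MM (gj j))"
        by (simp add: integral_sum MM_integrable[OF gjc])
      moreover have "(\<lambda>x. \<Sum>j<N. gj j x) = g" using gsum by auto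
      ultimately show ?thesis by simp
    qed
    finally have 1: "(\<Sum>j<N. h * b (Suc (Suc j))) \<le> integral\<^sup>L MM g" .
    have t1: "(\<Sum>j<N. b j - b (Suc j)) = b 0 - b N" by (rule sum_lessThan_telescope')
    have t2: "(\<Sum>j<N. b (Suc j) - b (Suc (Suc j))) = b (Suc 0) - b (Suc N)"
      using sum_lessThan_telescope'[of "\<lambda>j. b (Suc j)" N] by simp
    have "(\<Sum>j<N. b j - b (Suc (Suc j))) = (\<Sum>j<N. (b j - b (Suc j)) + (b (Suc j) - b (Suc (Suc j))))"
      by simp
    also have "\<dots> = (\<Sum>j<N. b j - b (Suc j)) + (\<Sum>j<N. b (Suc j) - b (Suc (Suc j)))"
      by (rule sum.distrib)
    finally have t3: "(\<Sum>j<N. b j - b (Suc (Suc j))) = b 0 - b N + (b (Suc 0) - b (Suc N))"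
      unfolding t1 t2 .
    have "b 0 \<le> L1" "0 \<le> b N" "b (Suc 0) \<le> L1" "0 \<le> b (Suc N)" unfolding b_def using a_bd by auto
    then have 2: "(\<Sum>j<N. b j - b (Suc (Suc j))) \<le> 2 * L1" unfolding t3 by linarith
    have 3: "(\<Sum>j<N. h * b j) = (\<Sum>j<N. h * b (Suc (Suc j))) + h * (\<Sum>j<N. b j - b (Suc (Suc j)))"
      by (simp add: sum_distrib_left right_diff_distrib sum_subtractf)
    have "h * (\<Sum>j<N. b j - b (Suc (Suc j))) \<le> h * (2 * L1)" using 2 h0 by (intro mult_left_mono) auto
    then show ?thesis unfolding 3 using 1 he by linarith
  qed
  finally show "L g \<le> integral\<^sup>L MM g + e" .
qed

lemma L_le_int:
  assumes gc: "continuous_on UNIV g"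
  shows "L g \<le> integral\<^sup>L MM g"
proof -
  obtain B where B: "\<And>x. \<bar>g x\<bar> \<le> B" using cont_bounded cpt gc by blast
  have c1: "continuous_on UNIV (\<lambda>x::'a. 1::real)" by simp
  have gB: "continuous_on UNIV (\<lambda>x. g x + B * 1)" by (intro continuous_intros gc)
  have "L (\<lambda>x. g x + B * 1) \<le> integral\<^sup>L MM (\<lambda>x. g x + B * 1)"
    using B by (intro L_le_int_nonneg gB) (smt (verit))
  moreover have "L (\<lambda>x. g x + B * 1) = L g + B * L1"
    unfolding L1_def using Ladd[OF gc, of "\<lambda>x. B * 1"] Lscale[OF c1, of B] by (simp add: continuous_intros)
  moreover have "integral\<^sup>L MM (\<lambda>x. g x + B * 1) = integral\<^sup>L MM g + B * L1"
  proof -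
    have "integral\<^sup>L MM (\<lambda>x. g x + B * 1) = integral\<^sup>L MM g + integral\<^sup>L MM (\<lambda>x. B)"
      using Bochner_Integration.integral_add[OF MM_integrable[OF gc] finite_measure.integrable_const[OF MM_finite], of B] by simp
    also have "integral\<^sup>L MM (\<lambda>x. B) = B * L1" using MM_UNIV MM_facts(2) by simp
    finally show ?thesis .
  qed
  ultimately show ?thesis by simp
qed

lemma int_eq_L:
  assumes gc: "continuous_on UNIV g"
  shows "integral\<^sup>L MM g = L g"
proof -
  have ng: "continuous_on UNIV (\<lambda>x. (-1) * g x)" by (intro continuous_intros gc)
  have "L (\<lambda>x. (-1) * g x) \<le> integral\<^sup>L MM (\<lambda>x. (-1) * g x)" by (rule L_le_int[OF ng])
  then have "integral\<^sup>L MM g \<le> L g" using Lscale[OF gc, of "-1"] by simp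
  then show ?thesis using L_le_int[OF gc] by simp
qed

end

theorem riesz_cpt:
  fixes L :: "('a::metric_space \<Rightarrow> real) \<Rightarrow> real"
  assumes "compact (UNIV :: 'a set)"
    and "\<And>f g. continuous_on UNIV f \<Longrightarrow> continuous_on UNIV g \<Longrightarrow> L (\<lambda>x. f x + g x) = L f + L g"
    and "\<And>f c. continuous_on UNIV f \<Longrightarrow> L (\<lambda>x. c * f x) = c * L f"
    and "\<And>f. continuous_on UNIV f \<Longrightarrow> (\<And>x. f x \<ge> 0) \<Longrightarrow> L f \<ge> 0"
  shows "\<exists>M. finite_measure M \<and> sets M = sets borel \<and>
    (\<forall>g. continuous_on UNIV g \<longrightarrow> integrable M g \<and> integral\<^sup>L M g = L g)"
proof -
  interpret rz L using assms by unfold_locales auto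
  show ?thesis using MM_finite MM_facts(1) MM_integrable int_eq_L by blast
qed


lemma cont_meas: "continuous_on UNIV (g :: 'a::metric_space \<Rightarrow> real) \<Longrightarrow> sets M = sets borel \<Longrightarrow> g \<in> borel_measurable M"
  by (subst measurable_cong_sets[of M borel borel borel]) (auto intro: borel_measurable_continuous_onI)

lemma closed_meas_eq:
  fixes M1 M2 :: "'a::metric_space measure"
  assumes cpt: "compact (UNIV :: 'a set)"
    and fm: "finite_measure M1" "finite_measure M2" and sm: "sets M1 = sets borel" "sets M2 = sets borel"
    and eq: "\<And>g::'a \<Rightarrow> real. continuous_on UNIV g \<Longrightarrow> integral\<^sup>L M1 g = integral\<^sup>L M2 g"
    and F: "closed F" "F \<noteq> {}"
  shows "measure M1 F = measure M2 F"
proof -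
  define s where "s n x = max 0 (1 - real n * infdist x F)" for n :: nat and x :: 'a
  have sc: "continuous_on UNIV (s n)" for n unfolding s_def by (intro continuous_intros continuous_on_infdist)
  have lim: "(\<lambda>n. s n x) \<longlonglongrightarrow> indicator F x" for x
  proof (cases "x \<in> F")
    case True
    then have "infdist x F = 0" by simp
    then show ?thesis using True unfolding s_def by simp
  next
    case False
    then have d: "infdist x F > 0" using in_closed_iff_infdist_zero[OF F] infdist_nonneg[of x F] by auto
    obtain N :: nat where N: "1 / infdist x F \<le> real N" using real_arch_simple by blast
    have "\<forall>n\<ge>N. s n x = 0"
    proof (intro allI impI)
      fix n assume "n \<ge> N"
      then have "1 / infdist x F \<le> real n" using N by linarith
      then have "1 \<le> real n * infdist x F" using d by (simp add: field_simps)
      then show "s n x = 0" unfolding s_def by simp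
    qed
    then have "eventually (\<lambda>n. s n x = indicator F x) sequentially"
      using False unfolding eventually_sequentially by auto
    then show ?thesis by (rule tendsto_eventually)
  qed
  have bnd: "norm (s n x) \<le> 1" for n x unfolding s_def by (simp add: infdist_nonneg)
  have Fb: "F \<in> sets borel" using F by simp
  have conv: "(\<lambda>n. integral\<^sup>L M (s n)) \<longlonglongrightarrow> measure M F" if "finite_measure M" "sets M = sets borel" for M
  proof -
    have "(\<lambda>n. integral\<^sup>L M (s n)) \<longlonglongrightarrow> integral\<^sup>L M (indicator F :: 'a \<Rightarrow> real)"
    proof (rule integral_dominated_convergence[where w = "\<lambda>x. 1"])
      show "indicator F \<in> borel_measurable M" using Fb that(2) by (simp add: borel_measurable_indicator_iff)
      show "s n \<in> borel_measurable M" for n using cont_meas[OF sc that(2)] .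
      show "integrable M (\<lambda>x. 1::real)" using finite_measure.integrable_const[OF that(1)] .
      show "AE x in M. (\<lambda>n. s n x) \<longlonglongrightarrow> indicator F x" using lim by simp
      show "AE x in M. norm (s n x) \<le> 1" for n using bnd by simp
    qed
    moreover have "integral\<^sup>L M (indicator F :: 'a \<Rightarrow> real) = measure M F"
      using that(2) by (simp add: sets_eq_imp_space_eq[of M borel])
    ultimately show ?thesis by simp
  qed
  have "(\<lambda>n. integral\<^sup>L M1 (s n)) = (\<lambda>n. integral\<^sup>L M2 (s n))" using eq[OF sc] by simp
  then show ?thesis using conv[OF fm(1) sm(1)] conv[OF fm(2) sm(2)] LIMSEQ_unique by metis
qed

lemma meas_unique:
  fixes M1 M2 :: "'a::metric_space measure"
  assumes cpt: "compact (UNIV :: 'a set)"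
    and fm: "finite_measure M1" "finite_measure M2" and sm: "sets M1 = sets borel" "sets M2 = sets borel"
    and eq: "\<And>g::'a \<Rightarrow> real. continuous_on UNIV g \<Longrightarrow> integral\<^sup>L M1 g = integral\<^sup>L M2 g"
  shows "M1 = M2"
proof (rule measure_eqI_generator_eq[where E = "Collect closed" and \<Omega> = UNIV and A = "\<lambda>i. UNIV"])
  show "Int_stable (Collect closed)" unfolding Int_stable_def by auto
  show "Collect closed \<subseteq> Pow UNIV" by auto
  have sb: "sets borel = sigma_sets UNIV (Collect closed)"
    by (subst borel_eq_closed) (simp add: sets_measure_of)
  show "sets M1 = sigma_sets UNIV (Collect closed)" "sets M2 = sigma_sets UNIV (Collect closed)" using sm sb by auto
  show "range (\<lambda>i. UNIV) \<subseteq> Collect closed" by auto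
  show "(\<Union>i. UNIV) = UNIV" by simp
  show "emeasure M1 UNIV \<noteq> \<infinity>" for i :: nat
    using finite_measure.emeasure_finite[OF fm(1), of UNIV] by simp
  fix X :: "'a set" assume "X \<in> Collect closed"
  then have X: "closed X" by simp
  show "emeasure M1 X = emeasure M2 X"
  proof (cases "X = {}")
    case True then show ?thesis by simp
  next
    case False
    have "X \<in> sets M1" "X \<in> sets M2" using X sm by auto
    then show ?thesis using closed_meas_eq[OF cpt fm sm eq X False]
      by (simp add: finite_measure.emeasure_eq_measure[OF fm(1)] finite_measure.emeasure_eq_measure[OF fm(2)])
  qed
qed


definition ipS :: "('a \<Rightarrow> 'a \<Rightarrow> real) \<Rightarrow> 'a set \<Rightarrow> ('a \<Rightarrow> real) \<Rightarrow> ('a \<Rightarrow> real) \<Rightarrow> real" where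
  "ipS k S a b = (\<Sum>x\<in>S. \<Sum>y\<in>S. a x * b y * k x y)"

lemma fin_coeff_diff: "fin_coeff a \<Longrightarrow> fin_coeff b \<Longrightarrow> fin_coeff (\<lambda>x. a x - b x)"
  unfolding fin_coeff_def csupp_def by (rule finite_subset[of _ "{x. a x \<noteq> 0} \<union> {x. b x \<noteq> 0}"]) auto

lemma fin_coeff_add: "fin_coeff a \<Longrightarrow> fin_coeff b \<Longrightarrow> fin_coeff (\<lambda>x. a x + b x)"
  unfolding fin_coeff_def csupp_def by (rule finite_subset[of _ "{x. a x \<noteq> 0} \<union> {x. b x \<noteq> 0}"]) auto

lemma fin_coeff_scale: "fin_coeff a \<Longrightarrow> fin_coeff (\<lambda>x. c * a x)"
  unfolding fin_coeff_def csupp_def by (rule finite_subset[of _ "{x. a x \<noteq> 0}"]) auto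

lemma fin_coeff_delta: "fin_coeff (\<lambda>x. if x = y then 1 else 0)"
  unfolding fin_coeff_def csupp_def by (rule finite_subset[of _ "{y}"]) auto

lemma csupp_diff: "csupp (\<lambda>x. a x - b x) \<subseteq> csupp a \<union> csupp b"
  unfolding csupp_def by auto
lemma csupp_add: "csupp (\<lambda>x. a x + b x) \<subseteq> csupp a \<union> csupp b"
  unfolding csupp_def by auto
lemma csupp_scale: "csupp (\<lambda>x. c * a x) \<subseteq> csupp a"
  unfolding csupp_def by auto

lemma sum_csupp_ext:
  assumes "finite S" "csupp a \<subseteq> S"
  shows "(\<Sum>x\<in>csupp a. a x * F x) = (\<Sum>x\<in>S. a x * F x)"
  by (rule sum.mono_neutral_left) (use assms in \<open>auto simp: csupp_def\<close>)

lemma prenorm2_ext: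
  assumes "finite S" "csupp a \<subseteq> S"
  shows "prenorm2 k a = ipS k S a a"
proof -
  have "prenorm2 k a = (\<Sum>x\<in>csupp a. a x * (\<Sum>y\<in>csupp a. a y * k x y))"
    unfolding prenorm2_def by (simp add: sum_distrib_left mult.assoc)
  also have "\<dots> = (\<Sum>x\<in>S. a x * (\<Sum>y\<in>csupp a. a y * k x y))" by (rule sum_csupp_ext[OF assms])
  also have "\<dots> = (\<Sum>x\<in>S. a x * (\<Sum>y\<in>S. a y * k x y))"
    using sum_csupp_ext[OF assms, of "\<lambda>y. k _ y"] by simp
  also have "\<dots> = ipS k S a a" unfolding ipS_def by (simp add: sum_distrib_left mult.assoc)
  finally show ?thesis .
qed

lemma kspan_ext:
  assumes "finite S" "csupp a \<subseteq> S"
  shows "kspan k a y = (\<Sum>x\<in>S. a x * k x y)"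
  unfolding kspan_def by (rule sum_csupp_ext[OF assms])

lemma ipS_add1: "ipS k S (\<lambda>x. a x + b x) c = ipS k S a c + ipS k S b c"
  unfolding ipS_def by (simp add: sum.distrib[symmetric] algebra_simps)
lemma ipS_diff1: "ipS k S (\<lambda>x. a x - b x) c = ipS k S a c - ipS k S b c"
  unfolding ipS_def by (simp add: sum_subtractf[symmetric] algebra_simps)
lemma ipS_scale1: "ipS k S (\<lambda>x. t * a x) c = t * ipS k S a c"
  unfolding ipS_def by (simp add: sum_distrib_left algebra_simps)
lemma ipS_add2: "ipS k S c (\<lambda>x. a x + b x) = ipS k S c a + ipS k S c b"
  unfolding ipS_def by (simp add: sum.distrib[symmetric] algebra_simps)
lemma ipS_diff2: "ipS k S c (\<lambda>x. a x - b x) = ipS k S c a - ipS k S c b"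
  unfolding ipS_def by (simp add: sum_subtractf[symmetric] algebra_simps)
lemma ipS_scale2: "ipS k S c (\<lambda>x. t * a x) = t * ipS k S c a"
  unfolding ipS_def by (simp add: sum_distrib_left algebra_simps)

lemma ipS_sym: "(\<And>x y. k x y = k y x) \<Longrightarrow> ipS k S a b = ipS k S b a"
  unfolding ipS_def by (subst sum.swap) (simp add: algebra_simps)

lemma quad_cs:
  fixes P I Q :: real
  assumes "\<And>t. 0 \<le> P - 2 * t * I + t^2 * Q" "0 \<le> P" "0 \<le> Q"
  shows "\<bar>I\<bar> \<le> sqrt P * sqrt Q"
proof -
  have "I^2 \<le> P * Q"
  proof (cases "Q = 0")
    case True
    have "I = 0"
    proof (rule ccontr)
      assume "I \<noteq> 0"
      then have "0 \<le> P - 2 * ((P + 1) / (2 * I)) * I" using assms(1)[of "(P + 1) / (2 * I)"] True by simp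
      then show False using \<open>I \<noteq> 0\<close> by (simp add: field_simps)
    qed
    then show ?thesis using True by simp
  next
    case False
    then have Q: "Q > 0" using assms(3) by simp
    have "0 \<le> P - 2 * (I / Q) * I + (I / Q)^2 * Q" by (rule assms(1))
    also have "\<dots> = P - I^2 / Q" using Q by (simp add: field_simps power2_eq_square)
    finally have "I^2 / Q \<le> P" by simp
    then show ?thesis using Q by (simp add: field_simps)
  qed
  then have "sqrt (I^2) \<le> sqrt (P * Q)" by (rule real_sqrt_le_mono)
  then show ?thesis by (simp add: real_sqrt_mult)
qed

locale kern =
  fixes k :: "'a \<Rightarrow> 'a \<Rightarrow> real"
  assumes ksym: "\<And>x y. k x y = k y x"
    and kpsd: "\<And>a. fin_coeff a \<Longrightarrow> 0 \<le> prenorm2 k a"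
    and kdiag: "\<And>y. k y y \<le> 1"
begin

lemma cs:
  assumes S: "finite S" "csupp a \<subseteq> S" "csupp b \<subseteq> S" and fa: "fin_coeff a" and fb: "fin_coeff b"
  shows "\<bar>ipS k S a b\<bar> \<le> sqrt (prenorm2 k a) * sqrt (prenorm2 k b)"
proof -
  have pa: "prenorm2 k a = ipS k S a a" by (rule prenorm2_ext[OF S(1,2)])
  have pb: "prenorm2 k b = ipS k S b b" by (rule prenorm2_ext[OF S(1,3)])
  show ?thesis unfolding pa pb
  proof (rule quad_cs)
    fix t :: real
    have fc: "fin_coeff (\<lambda>x. a x - t * b x)" by (intro fin_coeff_diff fin_coeff_scale fa fb)
    have cs: "csupp (\<lambda>x. a x - t * b x) \<subseteq> S" using S csupp_diff[of a "\<lambda>x. t * b x"] csupp_scale[of t b] by blast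
    have "0 \<le> prenorm2 k (\<lambda>x. a x - t * b x)" by (rule kpsd[OF fc])
    also have "\<dots> = ipS k S (\<lambda>x. a x - t * b x) (\<lambda>x. a x - t * b x)" by (rule prenorm2_ext[OF S(1) cs])
    also have "\<dots> = ipS k S a a - 2 * t * ipS k S a b + t^2 * ipS k S b b"
      unfolding ipS_diff1 ipS_diff2 ipS_scale1 ipS_scale2 using ipS_sym[of k S b a, OF ksym]
      by (simp add: algebra_simps power2_eq_square)
    finally show "0 \<le> ipS k S a a - 2 * t * ipS k S a b + t^2 * ipS k S b b" .
  qed (use kpsd[OF fa] kpsd[OF fb] pa pb in auto)
qed

lemma mink:
  assumes fa: "fin_coeff a" and fb: "fin_coeff b"
  shows "sqrt (prenorm2 k (\<lambda>x. a x + b x)) \<le> sqrt (prenorm2 k a) + sqrt (prenorm2 k b)"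
proof -
  define S where "S = csupp a \<union> csupp b"
  have S: "finite S" "csupp a \<subseteq> S" "csupp b \<subseteq> S" "csupp (\<lambda>x. a x + b x) \<subseteq> S"
    using fa fb csupp_add[of a b] unfolding S_def fin_coeff_def by auto
  have "prenorm2 k (\<lambda>x. a x + b x) = ipS k S a a + 2 * ipS k S a b + ipS k S b b"
    unfolding prenorm2_ext[OF S(1) S(4)] ipS_add1 ipS_add2 using ipS_sym[of k S b a, OF ksym] by simp
  also have "\<dots> \<le> prenorm2 k a + 2 * (sqrt (prenorm2 k a) * sqrt (prenorm2 k b)) + prenorm2 k b"
    using cs[OF S(1-3) fa fb] prenorm2_ext[OF S(1) S(2)] prenorm2_ext[OF S(1) S(3)] by simp
  also have "\<dots> = (sqrt (prenorm2 k a) + sqrt (prenorm2 k b))^2"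
    using kpsd[OF fa] kpsd[OF fb] by (simp add: power2_eq_square algebra_simps)
  finally have "sqrt (prenorm2 k (\<lambda>x. a x + b x)) \<le> sqrt ((sqrt (prenorm2 k a) + sqrt (prenorm2 k b))^2)"
    by (rule real_sqrt_le_mono)
  then show ?thesis using kpsd[OF fa] kpsd[OF fb] by simp
qed

lemma p_neg: "prenorm2 k (\<lambda>x. - a x) = prenorm2 k a"
proof -
  have "csupp (\<lambda>x. - a x) = csupp a" unfolding csupp_def by auto
  then show ?thesis unfolding prenorm2_def by simp
qed

lemma p_swap: "prenorm2 k (\<lambda>x. a x - b x) = prenorm2 k (\<lambda>x. b x - a x)"
  using p_neg[of "\<lambda>x. b x - a x"] by simp

lemma mink_diff:
  assumes "fin_coeff a" "fin_coeff b" "fin_coeff c"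
  shows "sqrt (prenorm2 k (\<lambda>x. a x - c x)) \<le> sqrt (prenorm2 k (\<lambda>x. a x - b x)) + sqrt (prenorm2 k (\<lambda>x. b x - c x))"
  using mink[OF fin_coeff_diff[OF assms(1,2)] fin_coeff_diff[OF assms(2,3)]] by simp

lemma kspan_bound:
  assumes fa: "fin_coeff a"
  shows "\<bar>kspan k a y\<bar> \<le> sqrt (prenorm2 k a)"
proof -
  define d where "d = (\<lambda>x::'a. if x = y then (1::real) else 0)"
  define S where "S = csupp a \<union> {y}"
  have fd: "fin_coeff d" unfolding d_def by (rule fin_coeff_delta)
  have S: "finite S" "csupp a \<subseteq> S" "csupp d \<subseteq> S" using fa unfolding S_def fin_coeff_def d_def csupp_def by auto
  have yS: "y \<in> S" unfolding S_def by simp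
  have inner: "(\<Sum>z\<in>S. c x * d z * k x z) = c x * k x y" for c x
  proof -
    have "(\<Sum>z\<in>S. c x * d z * k x z) = (\<Sum>z\<in>S. if z = y then c x * k x y else 0)"
      by (rule sum.cong) (auto simp: d_def)
    also have "\<dots> = c x * k x y" using yS S(1) by simp
    finally show ?thesis .
  qed
  have "ipS k S a d = (\<Sum>x\<in>S. a x * k x y)"
    unfolding ipS_def using inner[of a] by simp
  also have "\<dots> = kspan k a y" by (rule kspan_ext[OF S(1,2), symmetric])
  finally have e1: "kspan k a y = ipS k S a d" by simp
  have "prenorm2 k d = ipS k S d d" by (rule prenorm2_ext[OF S(1,3)])
  also have "\<dots> = (\<Sum>x\<in>S. d x * k x y)" unfolding ipS_def using inner[of d] by simp
  also have "\<dots> = (\<Sum>x\<in>S. if x = y then k y y else 0)" by (rule sum.cong) (auto simp: d_def)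
  also have "\<dots> = k y y" using yS S(1) by simp
  finally have e2: "prenorm2 k d = k y y" .
  have "\<bar>kspan k a y\<bar> \<le> sqrt (prenorm2 k a) * sqrt (k y y)" using cs[OF S fa fd] e1 e2 by simp
  also have "\<dots> \<le> sqrt (prenorm2 k a) * 1" using kdiag[of y] kpsd[OF fa] by (intro mult_left_mono) auto
  finally show ?thesis by simp
qed

lemma kspan_diff: "fin_coeff a \<Longrightarrow> fin_coeff b \<Longrightarrow> kspan k (\<lambda>x. a x - b x) y = kspan k a y - kspan k b y"
proof -
  assume fa: "fin_coeff a" and fb: "fin_coeff b"
  define S where "S = csupp a \<union> csupp b"
  have S: "finite S" "csupp a \<subseteq> S" "csupp b \<subseteq> S" "csupp (\<lambda>x. a x - b x) \<subseteq> S"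
    using fa fb csupp_diff[of a b] unfolding S_def fin_coeff_def by auto
  show ?thesis unfolding kspan_ext[OF S(1) S(2)] kspan_ext[OF S(1) S(3)] kspan_ext[OF S(1) S(4)]
    by (simp add: sum_subtractf[symmetric] algebra_simps)
qed

lemma ip_kspan:
  assumes "finite S" "csupp a \<subseteq> S" "csupp b \<subseteq> S"
  shows "ipS k S a b = (\<Sum>y\<in>csupp b. b y * kspan k a y)"
proof -
  have "ipS k S a b = (\<Sum>y\<in>S. b y * (\<Sum>x\<in>S. a x * k x y))"
    unfolding ipS_def by (subst sum.swap) (simp add: sum_distrib_left algebra_simps)
  also have "\<dots> = (\<Sum>y\<in>S. b y * kspan k a y)" using kspan_ext[OF assms(1,2)] by simp
  also have "\<dots> = (\<Sum>y\<in>csupp b. b y * kspan k a y)" by (rule sum_csupp_ext[OF assms(1,3), symmetric])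
  finally show ?thesis .
qed

end


context kern begin

abbreviation "pn a \<equiv> prenorm2 k a"

lemma sqrt_diff_le:
  assumes fu: "fin_coeff u" and fv: "fin_coeff v"
  shows "\<bar>sqrt (pn u) - sqrt (pn v)\<bar> \<le> sqrt (pn (\<lambda>x. u x - v x))"
proof -
  have z: "fin_coeff (\<lambda>x. 0)" unfolding fin_coeff_def csupp_def by simp
  have 1: "sqrt (pn u) \<le> sqrt (pn (\<lambda>x. u x - v x)) + sqrt (pn v)"
    using mink[OF fin_coeff_diff[OF fu fv] fv] by simp
  have 2: "sqrt (pn v) \<le> sqrt (pn (\<lambda>x. v x - u x)) + sqrt (pn u)"
    using mink[OF fin_coeff_diff[OF fv fu] fu] by simp
  have "sqrt (pn (\<lambda>x. v x - u x)) = sqrt (pn (\<lambda>x. u x - v x))" using p_swap[of v u] by simp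
  then show ?thesis using 1 2 by linarith
qed

lemma approx_conv:
  assumes "rkhs_approx k f a"
  shows "convergent (\<lambda>n. sqrt (pn (a n)))"
proof -
  have fa: "\<And>n. fin_coeff (a n)" and C: "\<And>e. e > 0 \<Longrightarrow> \<exists>N. \<forall>m\<ge>N. \<forall>n\<ge>N. pn (\<lambda>x. a m x - a n x) < e"
    using assms unfolding rkhs_approx_def by auto
  have "Cauchy (\<lambda>n. sqrt (pn (a n)))"
  proof (rule metric_CauchyI)
    fix e :: real assume e: "e > 0"
    obtain N where N: "\<forall>m\<ge>N. \<forall>n\<ge>N. pn (\<lambda>x. a m x - a n x) < e^2" using C[of "e^2"] e by auto
    show "\<exists>M. \<forall>m\<ge>M. \<forall>n\<ge>M. dist (sqrt (pn (a m))) (sqrt (pn (a n))) < e"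
    proof (intro exI allI impI)
      fix m n assume "m \<ge> N" "n \<ge> N"
      then have "pn (\<lambda>x. a m x - a n x) < e^2" using N by auto
      then have "sqrt (pn (\<lambda>x. a m x - a n x)) < sqrt (e^2)" by (rule real_sqrt_less_mono)
      then have "sqrt (pn (\<lambda>x. a m x - a n x)) < e" using e by simp
      then show "dist (sqrt (pn (a m))) (sqrt (pn (a n))) < e"
        using sqrt_diff_le[OF fa fa, of m n] unfolding dist_real_def by linarith
    qed
  qed
  then show ?thesis by (simp add: Cauchy_convergent_iff)
qed

lemma approx_diff:
  assumes A: "rkhs_approx k f a" and B: "rkhs_approx k g b"
  shows "rkhs_approx k (\<lambda>x. f x - g x) (\<lambda>n x. a n x - b n x)"
proof -
  have fa: "\<And>n. fin_coeff (a n)" and Ca: "\<And>e. e > 0 \<Longrightarrow> \<exists>N. \<forall>m\<ge>N. \<forall>n\<ge>N. pn (\<lambda>x. a m x - a n x) < e"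
    and la: "\<And>y. (\<lambda>n. kspan k (a n) y) \<longlonglongrightarrow> f y"
    using A unfolding rkhs_approx_def by auto
  have fb: "\<And>n. fin_coeff (b n)" and Cb: "\<And>e. e > 0 \<Longrightarrow> \<exists>N. \<forall>m\<ge>N. \<forall>n\<ge>N. pn (\<lambda>x. b m x - b n x) < e"
    and lb: "\<And>y. (\<lambda>n. kspan k (b n) y) \<longlonglongrightarrow> g y"
    using B unfolding rkhs_approx_def by auto
  show ?thesis unfolding rkhs_approx_def
  proof (intro conjI allI impI)
    fix n show "fin_coeff (\<lambda>x. a n x - b n x)" by (rule fin_coeff_diff[OF fa fb])
  next
    fix e :: real assume e: "e > 0"
    obtain N1 where N1: "\<forall>m\<ge>N1. \<forall>n\<ge>N1. pn (\<lambda>x. a m x - a n x) < e / 4" using Ca[of "e/4"] e by auto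
    obtain N2 where N2: "\<forall>m\<ge>N2. \<forall>n\<ge>N2. pn (\<lambda>x. b m x - b n x) < e / 4" using Cb[of "e/4"] e by auto
    show "\<exists>N. \<forall>m\<ge>N. \<forall>n\<ge>N. pn (\<lambda>x. (a m x - b m x) - (a n x - b n x)) < e"
    proof (intro exI allI impI)
      fix m n assume mn: "m \<ge> max N1 N2" "n \<ge> max N1 N2"
      have eq: "(\<lambda>x. (a m x - b m x) - (a n x - b n x)) = (\<lambda>x. (a m x - a n x) + (b n x - b m x))"
        by (auto simp: algebra_simps)
      have s4: "sqrt (e/4) = sqrt e / 2" by (simp add: real_sqrt_divide)
      have "sqrt (pn (\<lambda>x. a m x - a n x)) < sqrt (e/4)" using N1 mn by (simp add: real_sqrt_less_iff)
      moreover have "sqrt (pn (\<lambda>x. b n x - b m x)) < sqrt (e/4)" using N2 mn by (simp add: real_sqrt_less_iff)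
      moreover have "sqrt (pn (\<lambda>x. (a m x - a n x) + (b n x - b m x))) \<le> sqrt (pn (\<lambda>x. a m x - a n x)) + sqrt (pn (\<lambda>x. b n x - b m x))"
        by (rule mink[OF fin_coeff_diff[OF fa fa] fin_coeff_diff[OF fb fb]])
      ultimately have "sqrt (pn (\<lambda>x. (a m x - b m x) - (a n x - b n x))) < sqrt e" unfolding eq s4 by linarith
      then show "pn (\<lambda>x. (a m x - b m x) - (a n x - b n x)) < e" by (simp add: real_sqrt_less_iff)
    qed
  next
    fix y show "(\<lambda>n. kspan k (\<lambda>x. a n x - b n x) y) \<longlonglongrightarrow> f y - g y"
      unfolding kspan_diff[OF fa fb] by (intro tendsto_diff la lb)
  qed
qed

lemma approx_zero:
  assumes A: "rkhs_approx k (\<lambda>x. 0) d"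
  shows "(\<lambda>n. pn (d n)) \<longlonglongrightarrow> 0"
proof -
  have fd: "\<And>n. fin_coeff (d n)" and C: "\<And>e. e > 0 \<Longrightarrow> \<exists>N. \<forall>m\<ge>N. \<forall>n\<ge>N. pn (\<lambda>x. d m x - d n x) < e"
    and ld: "\<And>y. (\<lambda>n. kspan k (d n) y) \<longlonglongrightarrow> 0"
    using A unfolding rkhs_approx_def by auto
  have "Bseq (\<lambda>n. sqrt (pn (d n)))" using approx_conv[OF A] by (rule convergent_imp_Bseq)
  then obtain B where B: "B > 0" "\<And>n. norm (sqrt (pn (d n))) \<le> B" unfolding Bseq_def by auto
  show ?thesis unfolding LIMSEQ_iff
  proof (intro allI impI)
    fix e :: real assume e: "e > 0"
    define del where "del = e / (2 * B)"
    have del: "del > 0" unfolding del_def using e B by simp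
    obtain N where N: "\<forall>m\<ge>N. \<forall>n\<ge>N. pn (\<lambda>x. d m x - d n x) < del^2" using C[of "del^2"] del by auto
    define m where "m = N"
    have "(\<lambda>n. \<Sum>y\<in>csupp (d m). d m y * kspan k (d n) y) \<longlonglongrightarrow> (\<Sum>y\<in>csupp (d m). d m y * 0)"
      by (intro tendsto_sum tendsto_mult tendsto_const ld)
    then have "(\<lambda>n. \<Sum>y\<in>csupp (d m). d m y * kspan k (d n) y) \<longlonglongrightarrow> 0" by simp
    from LIMSEQ_D[OF this, of "e/2"] e obtain N2 where N2: "\<forall>n\<ge>N2. \<bar>\<Sum>y\<in>csupp (d m). d m y * kspan k (d n) y\<bar> < e / 2"
      by auto
    show "\<exists>no. \<forall>n\<ge>no. norm (pn (d n) - 0) < e"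
    proof (intro exI allI impI)
      fix n assume n: "n \<ge> max N N2"
      define S where "S = csupp (d n) \<union> csupp (d m)"
      have S: "finite S" "csupp (d n) \<subseteq> S" "csupp (d m) \<subseteq> S" "csupp (\<lambda>x. d n x - d m x) \<subseteq> S"
        using fd[of n] fd[of m] csupp_diff[of "d n" "d m"] unfolding S_def fin_coeff_def by auto
      have "pn (d n) = ipS k S (d n) (d n)" by (rule prenorm2_ext[OF S(1,2)])
      also have "\<dots> = ipS k S (d n) (\<lambda>x. d n x - d m x) + ipS k S (d n) (d m)"
        unfolding ipS_diff2 by simp
      finally have eq: "pn (d n) = ipS k S (d n) (\<lambda>x. d n x - d m x) + ipS k S (d n) (d m)" .
      have "\<bar>ipS k S (d n) (\<lambda>x. d n x - d m x)\<bar> \<le> sqrt (pn (d n)) * sqrt (pn (\<lambda>x. d n x - d m x))"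
        by (rule cs[OF S(1,2,4) fd fin_coeff_diff[OF fd fd]])
      also have "\<dots> \<le> B * del"
      proof (rule mult_mono)
        show "sqrt (pn (d n)) \<le> B" using B(2)[of n] by simp
        have "pn (\<lambda>x. d n x - d m x) < del^2" using N n unfolding m_def by auto
        then have "sqrt (pn (\<lambda>x. d n x - d m x)) < sqrt (del^2)" by (rule real_sqrt_less_mono)
        then show "sqrt (pn (\<lambda>x. d n x - d m x)) \<le> del" using del by simp
        show "0 \<le> B" using B by simp
        show "0 \<le> sqrt (pn (\<lambda>x. d n x - d m x))" using kpsd[OF fin_coeff_diff[OF fd fd]] by simp
      qed
      also have "\<dots> = e / 2" unfolding del_def using B by simp
      finally have 1: "\<bar>ipS k S (d n) (\<lambda>x. d n x - d m x)\<bar> \<le> e / 2" .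
      have "ipS k S (d n) (d m) = (\<Sum>y\<in>csupp (d m). d m y * kspan k (d n) y)" by (rule ip_kspan[OF S(1-3)])
      then have 2: "\<bar>ipS k S (d n) (d m)\<bar> < e / 2" using N2 n by auto
      have "0 \<le> pn (d n)" by (rule kpsd[OF fd])
      then show "norm (pn (d n) - 0) < e" using eq 1 2 by simp
    qed
  qed
qed

lemma norm_lim:
  assumes A: "rkhs_approx k f a"
  shows "(\<lambda>n. sqrt (pn (a n))) \<longlonglongrightarrow> rkhs_norm k f"
proof -
  have fa: "\<And>n. fin_coeff (a n)" using A unfolding rkhs_approx_def by auto
  obtain s where s: "(\<lambda>n. sqrt (pn (a n))) \<longlonglongrightarrow> s" using approx_conv[OF A] unfolding convergent_def by blast
  have s0: "s \<ge> 0" by (rule LIMSEQ_le_const[OF s]) (simp add: kpsd[OF fa])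
  have sq: "(\<lambda>n. pn (a n)) \<longlonglongrightarrow> s^2"
  proof -
    have "(\<lambda>n. (sqrt (pn (a n)))^2) \<longlonglongrightarrow> s^2" by (intro tendsto_power s)
    then show ?thesis using kpsd[OF fa] by simp
  qed
  have uniq: "L = s^2" if B: "rkhs_approx k f b" "(\<lambda>n. pn (b n)) \<longlonglongrightarrow> L" for b L
  proof -
    have fb: "\<And>n. fin_coeff (b n)" using B unfolding rkhs_approx_def by auto
    have "rkhs_approx k (\<lambda>x. f x - f x) (\<lambda>n x. a n x - b n x)" by (rule approx_diff[OF A B(1)])
    then have "rkhs_approx k (\<lambda>x. 0) (\<lambda>n x. a n x - b n x)" by simp
    then have z0: "(\<lambda>n. pn (\<lambda>x. a n x - b n x)) \<longlonglongrightarrow> 0" by (rule approx_zero)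
    have z: "(\<lambda>n. sqrt (pn (\<lambda>x. a n x - b n x))) \<longlonglongrightarrow> 0" using tendsto_real_sqrt[OF z0] by simp
    have "(\<lambda>n. sqrt (pn (a n)) - sqrt (pn (b n))) \<longlonglongrightarrow> 0"
    proof (rule Lim_null_comparison[OF _ z])
      show "\<forall>\<^sub>F n in sequentially. norm (sqrt (pn (a n)) - sqrt (pn (b n))) \<le> sqrt (pn (\<lambda>x. a n x - b n x))"
        using sqrt_diff_le[OF fa fb] by simp
    qed
    then have "(\<lambda>n. sqrt (pn (a n)) - (sqrt (pn (a n)) - sqrt (pn (b n)))) \<longlonglongrightarrow> s - 0"
      by (intro tendsto_diff s)
    then have "(\<lambda>n. sqrt (pn (b n))) \<longlonglongrightarrow> s" by simp
    moreover have "(\<lambda>n. sqrt (pn (b n))) \<longlonglongrightarrow> sqrt L" by (intro tendsto_real_sqrt B(2))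
    ultimately have "s = sqrt L" by (rule LIMSEQ_unique)
    moreover have "L \<ge> 0" by (rule LIMSEQ_le_const[OF B(2)]) (simp add: kpsd[OF fb])
    ultimately show ?thesis by simp
  qed
  have "(THE L. \<exists>a. rkhs_approx k f a \<and> (\<lambda>n. pn (a n)) \<longlonglongrightarrow> L) = s^2"
  proof (rule the_equality)
    show "\<exists>a. rkhs_approx k f a \<and> (\<lambda>n. pn (a n)) \<longlonglongrightarrow> s^2" using A sq by blast
    fix L assume "\<exists>b. rkhs_approx k f b \<and> (\<lambda>n. pn (b n)) \<longlonglongrightarrow> L"
    then obtain b where "rkhs_approx k f b" "(\<lambda>n. pn (b n)) \<longlonglongrightarrow> L" by blast
    then show "L = s^2" by (rule uniq)
  qed
  then have "rkhs_norm k f = s" unfolding rkhs_norm_def using s0 by simp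
  then show ?thesis using s by simp
qed

lemma rkhs_bound: assumes "f \<in> rkhs k" shows "\<bar>f y\<bar> \<le> rkhs_norm k f"
proof -
  obtain a where A: "rkhs_approx k f a" using assms unfolding rkhs_def by auto
  have fa: "\<And>n. fin_coeff (a n)" and l: "(\<lambda>n. kspan k (a n) y) \<longlonglongrightarrow> f y" using A unfolding rkhs_approx_def by auto
  have "(\<lambda>n. \<bar>kspan k (a n) y\<bar>) \<longlonglongrightarrow> \<bar>f y\<bar>" by (intro tendsto_rabs l)
  then show ?thesis using norm_lim[OF A] kspan_bound[OF fa] by (intro LIMSEQ_le) auto
qed

lemma rkhs_diff: "f \<in> rkhs k \<Longrightarrow> g \<in> rkhs k \<Longrightarrow> (\<lambda>x. f x - g x) \<in> rkhs k"
  unfolding rkhs_def using approx_diff by blast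

lemma rkhs_tri:
  assumes "f \<in> rkhs k" "g \<in> rkhs k"
  shows "rkhs_norm k f \<le> rkhs_norm k g + rkhs_norm k (\<lambda>x. f x - g x)"
proof -
  obtain a where A: "rkhs_approx k f a" using assms unfolding rkhs_def by auto
  obtain b where B: "rkhs_approx k g b" using assms unfolding rkhs_def by auto
  have fa: "\<And>n. fin_coeff (a n)" using A unfolding rkhs_approx_def by auto
  have fb: "\<And>n. fin_coeff (b n)" using B unfolding rkhs_approx_def by auto
  have D: "rkhs_approx k (\<lambda>x. f x - g x) (\<lambda>n x. a n x - b n x)" by (rule approx_diff[OF A B])
  have "(\<lambda>n. sqrt (pn (b n)) + sqrt (pn (\<lambda>x. a n x - b n x))) \<longlonglongrightarrow> rkhs_norm k g + rkhs_norm k (\<lambda>x. f x - g x)"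
    by (intro tendsto_add norm_lim B D)
  moreover have "sqrt (pn (a n)) \<le> sqrt (pn (b n)) + sqrt (pn (\<lambda>x. a n x - b n x))" for n
    using sqrt_diff_le[OF fa[of n] fb[of n]] by linarith
  ultimately show ?thesis using norm_lim[OF A] by (intro LIMSEQ_le) auto
qed

lemma rkhs_swap:
  assumes "f \<in> rkhs k" "g \<in> rkhs k"
  shows "rkhs_norm k (\<lambda>x. f x - g x) = rkhs_norm k (\<lambda>x. g x - f x)"
proof -
  obtain a where A: "rkhs_approx k f a" using assms unfolding rkhs_def by auto
  obtain b where B: "rkhs_approx k g b" using assms unfolding rkhs_def by auto
  have "(\<lambda>n. sqrt (pn (\<lambda>x. a n x - b n x))) \<longlonglongrightarrow> rkhs_norm k (\<lambda>x. f x - g x)"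
    by (rule norm_lim[OF approx_diff[OF A B]])
  moreover have "(\<lambda>n. sqrt (pn (\<lambda>x. b n x - a n x))) \<longlonglongrightarrow> rkhs_norm k (\<lambda>x. g x - f x)"
    by (rule norm_lim[OF approx_diff[OF B A]])
  moreover have "(\<lambda>n. sqrt (pn (\<lambda>x. a n x - b n x))) = (\<lambda>n. sqrt (pn (\<lambda>x. b n x - a n x)))"
  proof (rule ext)
    fix n show "sqrt (pn (\<lambda>x. a n x - b n x)) = sqrt (pn (\<lambda>x. b n x - a n x))" using p_swap[of "a n" "b n"] by simp
  qed
  ultimately show ?thesis using LIMSEQ_unique by metis
qed

end


lemma pos_meas_D: "pos_meas \<sigma> \<Longrightarrow> finite_measure \<sigma> \<and> sets \<sigma> = sets borel \<and> space \<sigma> = UNIV"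
  unfolding pos_meas_def by (auto dest: sets_eq_imp_space_eq)

lemma pm_integrable:
  assumes "compact (UNIV :: 'a::metric_space set)" "pos_meas \<sigma>" "continuous_on UNIV (g :: 'a \<Rightarrow> real)"
  shows "integrable \<sigma> g"
  using pos_meas_D[OF assms(2)] by (intro cont_integrable[OF assms(1)] assms(3)) auto

lemma cont_fst: "continuous_on UNIV (\<lambda>(x, y). G x y) \<Longrightarrow> continuous_on UNIV (\<lambda>x. G x (y::'b::metric_space))"
proof -
  assume c: "continuous_on UNIV (\<lambda>(x, y). G x y)"
  have "continuous_on UNIV ((\<lambda>(x, y). G x y) \<circ> (\<lambda>x. (x, y)))"
    by (rule continuous_on_compose) (auto intro: continuous_intros continuous_on_subset[OF c])
  then show ?thesis by (simp add: comp_def)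
qed

lemma cont_snd: "continuous_on UNIV (\<lambda>(x, y). G x y) \<Longrightarrow> continuous_on UNIV (\<lambda>y. G (x::'b::metric_space) y)"
proof -
  assume c: "continuous_on UNIV (\<lambda>(x, y). G x y)"
  have "continuous_on UNIV ((\<lambda>(x, y). G x y) \<circ> (\<lambda>y. (x, y)))"
    by (rule continuous_on_compose) (auto intro: continuous_intros continuous_on_subset[OF c])
  then show ?thesis by (simp add: comp_def)
qed

lemma int_diff_bound:
  assumes "finite_measure M" "integrable M f" "integrable M g" "\<And>x. \<bar>f x - g x\<bar> \<le> e"
  shows "\<bar>integral\<^sup>L M f - integral\<^sup>L M g\<bar> \<le> e * measure M (space M)"
proof -
  have "\<bar>integral\<^sup>L M f - integral\<^sup>L M g\<bar> = \<bar>integral\<^sup>L M (\<lambda>x. f x - g x)\<bar>"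
    using assms(2,3) by simp
  also have "\<dots> \<le> integral\<^sup>L M (\<lambda>x. \<bar>f x - g x\<bar>)" by (rule integral_abs_bound)
  also have "\<dots> \<le> integral\<^sup>L M (\<lambda>x. e)"
    using assms finite_measure.integrable_const[OF assms(1)] by (intro integral_mono) auto
  also have "\<dots> = e * measure M (space M)" by simp
  finally show ?thesis .
qed

lemma param_cont:
  fixes G :: "'a::metric_space \<Rightarrow> 'a \<Rightarrow> real"
  assumes cpt: "compact (UNIV :: 'a set)" and pm: "pos_meas \<sigma>" and Gc: "continuous_on UNIV (\<lambda>(x, y). G x y)"
  shows "continuous_on UNIV (\<lambda>y. integral\<^sup>L \<sigma> (\<lambda>x. G x y))"
  unfolding continuous_on_sequentially
proof (intro allI ballI impI)
  fix s :: "nat \<Rightarrow> 'a" and a assume "(\<forall>n. s n \<in> UNIV) \<and> s \<longlonglongrightarrow> a"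
  then have s: "s \<longlonglongrightarrow> a" by simp
  have cpt2: "compact (UNIV :: ('a \<times> 'a) set)" using compact_Times[OF cpt cpt] by simp
  obtain B where B: "\<And>z. \<bar>(\<lambda>(x, y). G x y) z\<bar> \<le> B" using cont_bounded[OF cpt2 Gc] by blast
  have fm: "finite_measure \<sigma>" and sm: "sets \<sigma> = sets borel" using pos_meas_D[OF pm] by auto
  have "(\<lambda>n. integral\<^sup>L \<sigma> (\<lambda>x. G x (s n))) \<longlonglongrightarrow> integral\<^sup>L \<sigma> (\<lambda>x. G x a)"
  proof (rule integral_dominated_convergence[where w = "\<lambda>x. B"])
    show "(\<lambda>x. G x a) \<in> borel_measurable \<sigma>" by (rule cont_meas[OF cont_fst[OF Gc] sm])
    show "(\<lambda>x. G x (s n)) \<in> borel_measurable \<sigma>" for n by (rule cont_meas[OF cont_fst[OF Gc] sm])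
    show "integrable \<sigma> (\<lambda>x. B)" by (rule finite_measure.integrable_const[OF fm])
    show "AE x in \<sigma>. (\<lambda>n. G x (s n)) \<longlonglongrightarrow> G x a"
      using cont_snd[OF Gc] s by (auto simp: continuous_on_sequentially comp_def)
    show "AE x in \<sigma>. norm (G x (s n)) \<le> B" for n using B[of "(x, s n)" for x] by simp
  qed
  then show "((\<lambda>y. integral\<^sup>L \<sigma> (\<lambda>x. G x y)) \<circ> s) \<longlonglongrightarrow> integral\<^sup>L \<sigma> (\<lambda>x. G x a)"
    by (simp add: comp_def)
qed

locale mainctx =
  fixes c :: "'a::metric_space \<Rightarrow> 'a \<Rightarrow> real" and eps :: real and V :: "'a \<Rightarrow> real"
  assumes cpt: "compact (UNIV :: 'a set)"
    and epos: "eps > 0"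
    and cc: "continuous_on UNIV (\<lambda>(x, y). c x y)"
    and csym: "\<And>x y. c x y = c y x"
    and cnn: "\<And>x y. c x y \<ge> 0"
    and pd: "pos_def_kernel (kc c eps)"
    and univ: "universal_kernel (kc c eps)"
    and Vc: "continuous_on UNIV V"
begin

abbreviation "k \<equiv> kc c eps"

lemma ksym: "k x y = k y x" unfolding kc_def using csym by simp
lemma kpos: "k x y > 0" unfolding kc_def by simp
lemma kle1: "k x y \<le> 1" unfolding kc_def using cnn[of x y] epos by simp

lemma kcont: "continuous_on UNIV (\<lambda>(x, y). k x y)"
proof -
  have "(\<lambda>(x, y). k x y) = (\<lambda>z. exp (- ((\<lambda>(x, y). c x y) z) / eps))" by (auto simp: kc_def)
  moreover have "continuous_on UNIV (\<lambda>z. exp (- ((\<lambda>(x, y). c x y) z) / eps))"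
    by (intro continuous_intros cc) (use epos in auto)
  ultimately show ?thesis by simp
qed

lemma kmin: obtains m where "m > 0" "\<And>x y. m \<le> k x y"
proof -
  have cpt2: "compact (UNIV :: ('a \<times> 'a) set)" using compact_Times[OF cpt cpt] by simp
  obtain z where "\<forall>w \<in> UNIV. (\<lambda>(x, y). k x y) z \<le> (\<lambda>(x, y). k x y) w"
    using continuous_attains_inf[OF cpt2 _ kcont] by auto
  then show ?thesis using that[of "(\<lambda>(x, y). k x y) z"] kpos by (cases z) force
qed

definition "mm = (SOME m. m > 0 \<and> (\<forall>x y. m \<le> k x y))"
lemma mm: "mm > 0" "mm \<le> k x y"
proof -
  have "\<exists>m. m > 0 \<and> (\<forall>x y. m \<le> k x y)" using kmin by metis
  then have "mm > 0 \<and> (\<forall>x y. mm \<le> k x y)" unfolding mm_def by (rule someI_ex)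
  then show "mm > 0" "mm \<le> k x y" by auto
qed

lemma kern_k: "kern k"
proof
  show "k x y = k y x" for x y by (rule ksym)
  show "k y y \<le> 1" for y by (rule kle1)
  fix a :: "'a \<Rightarrow> real" assume fa: "fin_coeff a"
  show "0 \<le> prenorm2 k a"
  proof (cases "a = (\<lambda>_. 0)")
    case True then show ?thesis unfolding prenorm2_def csupp_def by simp
  next
    case False then show ?thesis using pd fa unfolding pos_def_kernel_def by (simp add: less_imp_le)
  qed
qed

sublocale kern k by (rule kern_k)

lemma kspan_cont: "continuous_on UNIV (kspan k a)"
  unfolding kspan_def by (intro continuous_intros continuous_on_sum cont_snd[OF kcont])

lemma Hc_cont: "pos_meas \<sigma> \<Longrightarrow> continuous_on UNIV (Hc k \<sigma>)"
  unfolding Hc_def by (rule param_cont[OF cpt _ kcont])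

lemma int_kspan:
  assumes pm: "pos_meas \<sigma>"
  shows "integral\<^sup>L \<sigma> (kspan k a) = (\<Sum>x\<in>csupp a. a x * Hc k \<sigma> x)"
proof -
  have int: "integrable \<sigma> (\<lambda>y. a x * k x y)" for x
    by (intro pm_integrable[OF cpt pm] continuous_intros cont_snd[OF kcont])
  have "integral\<^sup>L \<sigma> (kspan k a) = (\<Sum>x\<in>csupp a. integral\<^sup>L \<sigma> (\<lambda>y. a x * k x y))"
    unfolding kspan_def using int by (simp add: integral_sum)
  also have "\<dots> = (\<Sum>x\<in>csupp a. a x * Hc k \<sigma> x)"
    unfolding Hc_def using ksym by simp
  finally show ?thesis .
qed

lemma univ_approx:
  assumes "continuous_on UNIV g" "e > 0"
  obtains a where "fin_coeff a" "\<And>y. \<bar>g y - kspan k a y\<bar> < e"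
  using univ assms unfolding universal_kernel_def by blast

lemma Hc_inj:
  assumes p1: "pos_meas \<sigma>1" and p2: "pos_meas \<sigma>2" and eq: "Hc k \<sigma>1 = Hc k \<sigma>2"
  shows "\<sigma>1 = \<sigma>2"
proof -
  have f1: "finite_measure \<sigma>1" "sets \<sigma>1 = sets borel" "space \<sigma>1 = UNIV" using pos_meas_D[OF p1] by auto
  have f2: "finite_measure \<sigma>2" "sets \<sigma>2 = sets borel" "space \<sigma>2 = UNIV" using pos_meas_D[OF p2] by auto
  show ?thesis
  proof (rule meas_unique[OF cpt f1(1) f2(1) f1(2) f2(2)])
    fix g :: "'a \<Rightarrow> real" assume gc: "continuous_on UNIV g"
    have "\<bar>integral\<^sup>L \<sigma>1 g - integral\<^sup>L \<sigma>2 g\<bar> \<le> 0"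
    proof (rule field_le_epsilon)
      fix e :: real assume e: "e > 0"
      define C where "C = measure \<sigma>1 UNIV + measure \<sigma>2 UNIV + 1"
      have C: "C > 0" unfolding C_def by (simp add: add_nonneg_pos)
      obtain a where a: "fin_coeff a" "\<And>y. \<bar>g y - kspan k a y\<bar> < e / C"
        using univ_approx[OF gc, of "e / C"] e C by auto
      have 1: "\<bar>integral\<^sup>L \<sigma>1 g - integral\<^sup>L \<sigma>1 (kspan k a)\<bar> \<le> e / C * measure \<sigma>1 UNIV"
        using int_diff_bound[OF f1(1) pm_integrable[OF cpt p1 gc] pm_integrable[OF cpt p1 kspan_cont], where e = "e / C"] a(2) f1(3)
        by (simp add: less_imp_le)
      have 2: "\<bar>integral\<^sup>L \<sigma>2 g - integral\<^sup>L \<sigma>2 (kspan k a)\<bar> \<le> e / C * measure \<sigma>2 UNIV"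
        using int_diff_bound[OF f2(1) pm_integrable[OF cpt p2 gc] pm_integrable[OF cpt p2 kspan_cont], where e = "e / C"] a(2) f2(3)
        by (simp add: less_imp_le)
      have 3: "integral\<^sup>L \<sigma>1 (kspan k a) = integral\<^sup>L \<sigma>2 (kspan k a)"
        using int_kspan[OF p1] int_kspan[OF p2] eq by simp
      have "measure \<sigma>1 UNIV + measure \<sigma>2 UNIV \<le> C" unfolding C_def by simp
      then have "e / C * (measure \<sigma>1 UNIV + measure \<sigma>2 UNIV) \<le> e / C * C"
        using e C by (intro mult_left_mono) auto
      then have "e / C * measure \<sigma>1 UNIV + e / C * measure \<sigma>2 UNIV \<le> e / C * C"
        by (simp add: distrib_left)
      also have "\<dots> = e" using C by simp
      finally show "\<bar>integral\<^sup>L \<sigma>1 g - integral\<^sup>L \<sigma>2 g\<bar> \<le> 0 + e" using 1 2 3 by linarith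
    qed
    then show "integral\<^sup>L \<sigma>1 g = integral\<^sup>L \<sigma>2 g" by simp
  qed
qed

lemma Hc_inv_eq: "pos_meas \<sigma> \<Longrightarrow> Hc_inv k (Hc k \<sigma>) = \<sigma>"
  unfolding Hc_inv_def by (rule the_equality) (auto intro: Hc_inj)

lemma mass_bound:
  assumes pm: "pos_meas \<sigma>" and b1: "\<And>y. Hc k \<sigma> y \<le> 1"
  shows "measure \<sigma> UNIV \<le> 1 / mm"
proof -
  obtain y :: 'a where True by simp
  have f: "finite_measure \<sigma>" "space \<sigma> = UNIV" using pos_meas_D[OF pm] by auto
  have "mm * measure \<sigma> UNIV = integral\<^sup>L \<sigma> (\<lambda>x. mm)" using f by simp
  also have "\<dots> \<le> integral\<^sup>L \<sigma> (\<lambda>x. k x y)"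
    using mm finite_measure.integrable_const[OF f(1)] pm_integrable[OF cpt pm cont_fst[OF kcont]]
    by (intro integral_mono) auto
  also have "\<dots> = Hc k \<sigma> y" unfolding Hc_def by simp
  also have "\<dots> \<le> 1" by (rule b1)
  finally show ?thesis using mm(1) by (simp add: field_simps)
qed

end


lemma approx_convergent:
  fixes s :: "nat \<Rightarrow> real"
  assumes "\<And>e. e > 0 \<Longrightarrow> \<exists>t. convergent t \<and> (\<forall>n. \<bar>s n - t n\<bar> \<le> e)"
  shows "convergent s"
proof -
  have "Cauchy s"
  proof (rule metric_CauchyI)
    fix e :: real assume e: "e > 0"
    obtain t where t: "convergent t" "\<And>n. \<bar>s n - t n\<bar> \<le> e / 4" using assms[of "e/4"] e by auto
    have "Cauchy t" using t(1) by (simp add: Cauchy_convergent_iff)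
    then obtain M where M: "\<forall>m\<ge>M. \<forall>n\<ge>M. dist (t m) (t n) < e / 4" using e unfolding Cauchy_def
      by (meson divide_pos_pos zero_less_numeral)
    show "\<exists>M. \<forall>m\<ge>M. \<forall>n\<ge>M. dist (s m) (s n) < e"
    proof (intro exI allI impI)
      fix m n assume "m \<ge> M" "n \<ge> M"
      then have "\<bar>t m - t n\<bar> < e / 4" using M unfolding dist_real_def by auto
      then show "dist (s m) (s n) < e" using t(2)[of m] t(2)[of n] e unfolding dist_real_def by linarith
    qed
  qed
  then show ?thesis by (simp add: Cauchy_convergent_iff)
qed

lemma approx_tendsto:
  fixes s :: "nat \<Rightarrow> real"
  assumes "\<And>e. e > 0 \<Longrightarrow> \<exists>t T. t \<longlonglongrightarrow> T \<and> (\<forall>n. \<bar>s n - t n\<bar> \<le> e) \<and> \<bar>T - l\<bar> \<le> e"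
  shows "s \<longlonglongrightarrow> l"
  unfolding LIMSEQ_iff
proof (intro allI impI)
  fix r :: real assume r: "r > 0"
  obtain t T where t: "t \<longlonglongrightarrow> T" "\<And>n. \<bar>s n - t n\<bar> \<le> r / 4" "\<bar>T - l\<bar> \<le> r / 4" using assms[of "r/4"] r by auto
  obtain N where N: "\<forall>n\<ge>N. norm (t n - T) < r / 4" using LIMSEQ_D[OF t(1), of "r/4"] r by auto
  show "\<exists>no. \<forall>n\<ge>no. norm (s n - l) < r"
  proof (intro exI allI impI)
    fix n assume "n \<ge> N"
    then have "\<bar>t n - T\<bar> < r / 4" using N by auto
    then show "norm (s n - l) < r" using t(2)[of n] t(3) r by (simp, smt (verit))
  qed
qed

lemma abs4:
  fixes a b c d e t s :: real
  assumes "\<bar>a - b\<bar> \<le> e" "\<bar>c - d\<bar> \<le> e" "\<bar>b - d\<bar> < t" "2 * e < s"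
  shows "\<bar>a - c\<bar> < t + s"
  using assms by arith

context mainctx begin

lemma weak_conv_ex:
  fixes g :: "'a \<Rightarrow> real"
  assumes pm: "\<And>n. pos_meas (\<sigma> n)" and mb: "\<And>n. measure (\<sigma> n) UNIV \<le> C"
    and conv: "\<And>y. (\<lambda>n. Hc k (\<sigma> n) y) \<longlonglongrightarrow> \<beta> y" and gc: "continuous_on UNIV g"
  shows "convergent (\<lambda>n. integral\<^sup>L (\<sigma> n) g)"
proof (rule approx_convergent)
  fix e :: real assume e: "e > 0"
  have C0: "C \<ge> 0" using mb[of 0] measure_nonneg[of "\<sigma> 0" UNIV] by linarith
  define D where "D = C + 1"
  have D: "D > 0" "C \<le> D" unfolding D_def using C0 by auto
  obtain a where a: "fin_coeff a" "\<And>y. \<bar>g y - kspan k a y\<bar> < e / D" using univ_approx[OF gc, of "e / D"] e D by auto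
  define t where "t n = integral\<^sup>L (\<sigma> n) (kspan k a)" for n
  have "t = (\<lambda>n. \<Sum>x\<in>csupp a. a x * Hc k (\<sigma> n) x)" unfolding t_def using int_kspan[OF pm] by auto
  moreover have "(\<lambda>n. \<Sum>x\<in>csupp a. a x * Hc k (\<sigma> n) x) \<longlonglongrightarrow> (\<Sum>x\<in>csupp a. a x * \<beta> x)"
    by (intro tendsto_sum tendsto_mult tendsto_const conv)
  ultimately have "convergent t" unfolding convergent_def by auto
  moreover have "\<bar>integral\<^sup>L (\<sigma> n) g - t n\<bar> \<le> e" for n
  proof -
    have f: "finite_measure (\<sigma> n)" "space (\<sigma> n) = UNIV" using pos_meas_D[OF pm] by auto
    have "\<bar>integral\<^sup>L (\<sigma> n) g - t n\<bar> \<le> e / D * measure (\<sigma> n) UNIV"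
      unfolding t_def using int_diff_bound[OF f(1) pm_integrable[OF cpt pm gc] pm_integrable[OF cpt pm kspan_cont], where e = "e / D"] a(2) f(2)
      by (simp add: less_imp_le)
    also have "\<dots> \<le> e / D * D" using mb[of n] D e by (intro mult_left_mono) auto
    finally show ?thesis using D by simp
  qed
  ultimately show "\<exists>t. convergent t \<and> (\<forall>n. \<bar>integral\<^sup>L (\<sigma> n) g - t n\<bar> \<le> e)" by blast
qed

lemma weak_conv_lim:
  fixes g :: "'a \<Rightarrow> real"
  assumes pm: "\<And>n. pos_meas (\<sigma> n)" and mb: "\<And>n. measure (\<sigma> n) UNIV \<le> C"
    and pm0: "pos_meas \<sigma>0" and mb0: "measure \<sigma>0 UNIV \<le> C"
    and conv: "\<And>y. (\<lambda>n. Hc k (\<sigma> n) y) \<longlonglongrightarrow> Hc k \<sigma>0 y" and gc: "continuous_on UNIV g"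
  shows "(\<lambda>n. integral\<^sup>L (\<sigma> n) g) \<longlonglongrightarrow> integral\<^sup>L \<sigma>0 g"
proof (rule approx_tendsto)
  fix e :: real assume e: "e > 0"
  have C0: "C \<ge> 0" using mb[of 0] measure_nonneg[of "\<sigma> 0" UNIV] by linarith
  define D where "D = C + 1"
  have D: "D > 0" "C \<le> D" unfolding D_def using C0 by auto
  obtain a where a: "fin_coeff a" "\<And>y. \<bar>g y - kspan k a y\<bar> < e / D" using univ_approx[OF gc, of "e / D"] e D by auto
  define t where "t n = integral\<^sup>L (\<sigma> n) (kspan k a)" for n
  define T where "T = integral\<^sup>L \<sigma>0 (kspan k a)"
  have "t = (\<lambda>n. \<Sum>x\<in>csupp a. a x * Hc k (\<sigma> n) x)" unfolding t_def using int_kspan[OF pm] by auto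
  moreover have "(\<lambda>n. \<Sum>x\<in>csupp a. a x * Hc k (\<sigma> n) x) \<longlonglongrightarrow> (\<Sum>x\<in>csupp a. a x * Hc k \<sigma>0 x)"
    by (intro tendsto_sum tendsto_mult tendsto_const conv)
  ultimately have "t \<longlonglongrightarrow> T" unfolding T_def using int_kspan[OF pm0] by simp
  moreover have "\<bar>integral\<^sup>L (\<sigma> n) g - t n\<bar> \<le> e" for n
  proof -
    have f: "finite_measure (\<sigma> n)" "space (\<sigma> n) = UNIV" using pos_meas_D[OF pm] by auto
    have "\<bar>integral\<^sup>L (\<sigma> n) g - t n\<bar> \<le> e / D * measure (\<sigma> n) UNIV"
      unfolding t_def using int_diff_bound[OF f(1) pm_integrable[OF cpt pm gc] pm_integrable[OF cpt pm kspan_cont], where e = "e / D"] a(2) f(2)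
      by (simp add: less_imp_le)
    also have "\<dots> \<le> e / D * D" using mb[of n] D e by (intro mult_left_mono) auto
    finally show ?thesis using D by simp
  qed
  moreover have "\<bar>T - integral\<^sup>L \<sigma>0 g\<bar> \<le> e"
  proof -
    have f: "finite_measure \<sigma>0" "space \<sigma>0 = UNIV" using pos_meas_D[OF pm0] by auto
    have "\<bar>integral\<^sup>L \<sigma>0 g - T\<bar> \<le> e / D * measure \<sigma>0 UNIV"
      unfolding T_def using int_diff_bound[OF f(1) pm_integrable[OF cpt pm0 gc] pm_integrable[OF cpt pm0 kspan_cont], where e = "e / D"] a(2) f(2)
      by (simp add: less_imp_le)
    also have "\<dots> \<le> e / D * D" using mb0 D e by (intro mult_left_mono) auto
    finally show ?thesis using D by simp
  qed
  ultimately show "\<exists>t T. t \<longlonglongrightarrow> T \<and> (\<forall>n. \<bar>integral\<^sup>L (\<sigma> n) g - t n\<bar> \<le> e) \<and> \<bar>T - integral\<^sup>L \<sigma>0 g\<bar> \<le> e"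
    by blast
qed

lemma uwc:
  fixes G :: "'a \<Rightarrow> 'a \<Rightarrow> real" and y :: "nat \<Rightarrow> 'a"
  assumes Gc: "continuous_on UNIV (\<lambda>(x, y). G x y)"
    and pm: "\<And>n. pos_meas (\<sigma> n)" and mb: "\<And>n. measure (\<sigma> n) UNIV \<le> C"
    and pm0: "pos_meas \<sigma>0" and mb0: "measure \<sigma>0 UNIV \<le> C"
    and wc: "\<And>g::'a \<Rightarrow> real. continuous_on UNIV g \<Longrightarrow> (\<lambda>n. integral\<^sup>L (\<sigma> n) g) \<longlonglongrightarrow> integral\<^sup>L \<sigma>0 g"
    and yl: "y \<longlonglongrightarrow> y0"
  shows "(\<lambda>n. integral\<^sup>L (\<sigma> n) (\<lambda>x. G x (y n)) - integral\<^sup>L \<sigma>0 (\<lambda>x. G x (y n))) \<longlonglongrightarrow> 0"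
  unfolding LIMSEQ_iff
proof (intro allI impI)
  fix r :: real assume r: "r > 0"
  have C0: "C \<ge> 0" using mb0 measure_nonneg[of \<sigma>0 UNIV] by linarith
  define \<epsilon> where "\<epsilon> = r / (3 * (C + 1))"
  have \<epsilon>: "\<epsilon> > 0" unfolding \<epsilon>_def using r C0 by simp
  have eC: "2 * (\<epsilon> * C) < 2 * r / 3"
  proof -
    have "\<epsilon> * C < \<epsilon> * (C + 1)" using \<epsilon> by simp
    also have "\<epsilon> * (C + 1) = r / 3"
    proof -
      have "C + 1 > 0" "3 * C + 3 \<noteq> 0" using C0 by auto
      then show ?thesis unfolding \<epsilon>_def by (simp add: field_simps)
    qed
    finally show ?thesis by linarith
  qed
  have cpt2: "compact (UNIV :: ('a \<times> 'a) set)" using compact_Times[OF cpt cpt] by simp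
  have "uniformly_continuous_on UNIV (\<lambda>(x, y). G x y)" by (rule compact_uniformly_continuous[OF Gc cpt2])
  then have "\<exists>d>0. \<forall>z\<in>UNIV. \<forall>z'\<in>UNIV. dist z' z < d \<longrightarrow> dist ((\<lambda>(x, y). G x y) z') ((\<lambda>(x, y). G x y) z) < \<epsilon>"
    unfolding uniformly_continuous_on_def using \<epsilon> by blast
  then obtain \<delta> where \<delta>: "\<delta> > 0" "\<forall>z\<in>UNIV. \<forall>z'\<in>UNIV. dist z' z < \<delta> \<longrightarrow> dist ((\<lambda>(x, y). G x y) z') ((\<lambda>(x, y). G x y) z) < \<epsilon>"
    by blast
  have close: "\<bar>G x u - G x v\<bar> < \<epsilon>" if "dist u v < \<delta>" for x u v
  proof -
    have "dist (x, u) (x, v) = dist u v" by (simp add: dist_Pair_Pair)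
    then show ?thesis using \<delta>(2) that by (auto simp: dist_real_def)
  qed
  obtain N1 where N1: "\<And>n. n \<ge> N1 \<Longrightarrow> dist (y n) y0 < \<delta>" using yl \<delta>(1) unfolding lim_sequentially by blast
  have g0c: "continuous_on UNIV (\<lambda>x. G x y0)" by (rule cont_fst[OF Gc])
  obtain N2 where N2: "\<And>n. n \<ge> N2 \<Longrightarrow> norm (integral\<^sup>L (\<sigma> n) (\<lambda>x. G x y0) - integral\<^sup>L \<sigma>0 (\<lambda>x. G x y0)) < r / 3"
    using LIMSEQ_D[OF wc[OF g0c], of "r/3"] r by auto
  show "\<exists>no. \<forall>n\<ge>no. norm (integral\<^sup>L (\<sigma> n) (\<lambda>x. G x (y n)) - integral\<^sup>L \<sigma>0 (\<lambda>x. G x (y n)) - 0) < r"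
  proof (intro exI allI impI)
    fix n assume n: "n \<ge> max N1 N2"
    have cl: "\<bar>G x (y n) - G x y0\<bar> \<le> \<epsilon>" for x using close[of "y n" y0 x] N1[of n] n by simp
    have gnc: "continuous_on UNIV (\<lambda>x. G x (y n))" by (rule cont_fst[OF Gc])
    have f: "finite_measure (\<sigma> n)" "space (\<sigma> n) = UNIV" using pos_meas_D[OF pm] by auto
    have f0: "finite_measure \<sigma>0" "space \<sigma>0 = UNIV" using pos_meas_D[OF pm0] by auto
    have 1: "\<bar>integral\<^sup>L (\<sigma> n) (\<lambda>x. G x (y n)) - integral\<^sup>L (\<sigma> n) (\<lambda>x. G x y0)\<bar> \<le> \<epsilon> * C"
    proof -
      have "\<bar>integral\<^sup>L (\<sigma> n) (\<lambda>x. G x (y n)) - integral\<^sup>L (\<sigma> n) (\<lambda>x. G x y0)\<bar> \<le> \<epsilon> * measure (\<sigma> n) UNIV"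
        using int_diff_bound[OF f(1) pm_integrable[OF cpt pm gnc] pm_integrable[OF cpt pm g0c], where e = \<epsilon>] cl f(2) by simp
      also have "\<dots> \<le> \<epsilon> * C" using mb[of n] \<epsilon> by (intro mult_left_mono) auto
      finally show ?thesis .
    qed
    have 2: "\<bar>integral\<^sup>L \<sigma>0 (\<lambda>x. G x (y n)) - integral\<^sup>L \<sigma>0 (\<lambda>x. G x y0)\<bar> \<le> \<epsilon> * C"
    proof -
      have "\<bar>integral\<^sup>L \<sigma>0 (\<lambda>x. G x (y n)) - integral\<^sup>L \<sigma>0 (\<lambda>x. G x y0)\<bar> \<le> \<epsilon> * measure \<sigma>0 UNIV"
        using int_diff_bound[OF f0(1) pm_integrable[OF cpt pm0 gnc] pm_integrable[OF cpt pm0 g0c], where e = \<epsilon>] cl f0(2) by simp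
      also have "\<dots> \<le> \<epsilon> * C" using mb0 \<epsilon> by (intro mult_left_mono) auto
      finally show ?thesis .
    qed
    have 3: "\<bar>integral\<^sup>L (\<sigma> n) (\<lambda>x. G x y0) - integral\<^sup>L \<sigma>0 (\<lambda>x. G x y0)\<bar> < r / 3" using N2[of n] n by simp
    show "norm (integral\<^sup>L (\<sigma> n) (\<lambda>x. G x (y n)) - integral\<^sup>L \<sigma>0 (\<lambda>x. G x (y n)) - 0) < r"
      unfolding real_norm_def diff_0_right using abs4[OF 1 2 3 eC] by simp
  qed
qed

lemma null_near:
  fixes \<sigma> :: "'a measure"
  assumes pm: "pos_meas \<sigma>" and r: "r > 0" and ns: "\<And>z. z \<in> ball x r \<Longrightarrow> z \<notin> meas_supp \<sigma>"
  shows "emeasure \<sigma> (cball x (r/2)) = 0"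
proof -
  have sm: "sets \<sigma> = sets borel" using pos_meas_D[OF pm] by auto
  have "\<forall>z\<in>cball x (r/2). \<exists>\<rho>>0. emeasure \<sigma> (ball z \<rho>) = 0"
  proof
    fix z assume "z \<in> cball x (r/2)"
    then have "z \<in> ball x r" using r by (simp add: dist_commute)
    then have "z \<notin> meas_supp \<sigma>" by (rule ns)
    then show "\<exists>\<rho>>0. emeasure \<sigma> (ball z \<rho>) = 0" unfolding meas_supp_def by (auto simp: not_less)
  qed
  then obtain \<rho> where \<rho>: "\<And>z. z \<in> cball x (r/2) \<Longrightarrow> \<rho> z > 0 \<and> emeasure \<sigma> (ball z (\<rho> z)) = 0"
    by metis
  have K: "compact (cball x (r/2))" using compact_Int_closed[OF cpt closed_cball, of x "r/2"] by simp
  have "\<exists>J. J \<subseteq> cball x (r/2) \<and> finite J \<and> cball x (r/2) \<subseteq> (\<Union>z\<in>J. ball z (\<rho> z))"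
    apply (rule compactE_image[OF K, of "cball x (r/2)" "\<lambda>z. ball z (\<rho> z)"])
      apply simp
    using \<rho> apply force
    apply blast
    done
  then obtain J where J: "J \<subseteq> cball x (r/2)" "finite J" "cball x (r/2) \<subseteq> (\<Union>z\<in>J. ball z (\<rho> z))" by blast
  have "(\<Union>z\<in>J. ball z (\<rho> z)) \<in> null_sets \<sigma>"
  proof (rule null_sets.finite_UN[OF J(2)])
    fix z assume "z \<in> J"
    then have "emeasure \<sigma> (ball z (\<rho> z)) = 0" using \<rho> J(1) by blast
    moreover have "ball z (\<rho> z) \<in> sets \<sigma>" using sm by simp
    ultimately show "ball z (\<rho> z) \<in> null_sets \<sigma>" by (simp add: null_sets_def)
  qed
  moreover have "cball x (r/2) \<in> sets \<sigma>" using sm by simp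
  ultimately have "cball x (r/2) \<in> null_sets \<sigma>" using J(3) null_sets_subset by blast
  then show ?thesis by (simp add: null_sets_def)
qed

end


context mainctx begin

lemma Bset_D:
  assumes "b \<in> Bset k"
  shows "pos_meas (Hc_inv k b) \<and> b = Hc k (Hc_inv k b) \<and> measure (Hc_inv k b) UNIV \<le> 1 / mm
    \<and> b \<in> rkhs k \<and> rkhs_norm k b = 1 \<and> (\<forall>y. \<bar>b y\<bar> \<le> 1)"
proof -
  obtain \<sigma> where s: "pos_meas \<sigma>" "b = Hc k \<sigma>" and r: "b \<in> rkhs k" "rkhs_norm k b = 1"
    using assms unfolding Bset_def by auto
  have inv: "Hc_inv k b = \<sigma>" using Hc_inv_eq[OF s(1)] s(2) by simp
  have b1: "\<bar>b y\<bar> \<le> 1" for y using rkhs_bound[OF r(1), of y] r(2) by simp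
  have "Hc k \<sigma> y \<le> 1" for y
  proof -
    have "\<bar>Hc k \<sigma> y\<bar> \<le> 1" using b1[of y] s(2) by simp
    then show ?thesis by simp
  qed
  then have "measure \<sigma> UNIV \<le> 1 / mm" by (rule mass_bound[OF s(1)])
  then show ?thesis using s r inv b1 by simp
qed

lemma VGc: "continuous_on UNIV (\<lambda>(x, y). V x * k x y)"
proof -
  have "(\<lambda>(x, y). V x * k x y) = (\<lambda>z. V (fst z) * (\<lambda>(x, y). k x y) z)" by auto
  moreover have "continuous_on UNIV (\<lambda>z. V (fst z) * (\<lambda>(x, y). k x y) z)"
    by (intro continuous_intros continuous_on_compose2[OF Vc] kcont) auto
  ultimately show ?thesis by simp
qed

lemma part1: "b \<in> Bset k \<Longrightarrow> continuous_on UNIV (Wop eps k V b)"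
proof -
  assume b: "b \<in> Bset k"
  then have pm: "pos_meas (Hc_inv k b)" and be: "b = Hc k (Hc_inv k b)" using Bset_D by auto
  have "continuous_on UNIV b" using Hc_cont[OF pm] be by simp
  moreover have "continuous_on UNIV (Vstar k V b)"
    unfolding Vstar_def by (rule param_cont[OF cpt pm VGc])
  ultimately show ?thesis unfolding Wop_def by (intro continuous_intros Vc) auto
qed

lemma part2:
  assumes b: "b \<in> Bset k" and e: "e > 0"
  shows "\<exists>d>0. \<forall>b'\<in>Bset k. rkhs_norm k (\<lambda>x. b' x - b x) < d \<longrightarrow>
          (\<forall>x. \<bar>Wop eps k V b' x - Wop eps k V b x\<bar> < e)"
proof (rule ccontr)
  assume nt: "\<not> ?thesis"
  have H: "\<exists>b'\<in>Bset k. rkhs_norm k (\<lambda>x. b' x - b x) < d \<and> (\<exists>x. \<bar>Wop eps k V b' x - Wop eps k V b x\<bar> \<ge> e)"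
    if d: "d > 0" for d
  proof -
    from nt d have "\<not> (\<forall>b'\<in>Bset k. rkhs_norm k (\<lambda>x. b' x - b x) < d \<longrightarrow> (\<forall>x. \<bar>Wop eps k V b' x - Wop eps k V b x\<bar> < e))"
      by blast
    then show ?thesis by (auto simp: not_less)
  qed
  have "\<exists>bs. \<forall>n. bs n \<in> Bset k \<and> rkhs_norm k (\<lambda>x. bs n x - b x) < inverse (real (Suc n)) \<and>
          (\<exists>x. \<bar>Wop eps k V (bs n) x - Wop eps k V b x\<bar> \<ge> e)"
  proof (rule choice, rule allI)
    fix n :: nat
    have "inverse (real (Suc n)) > 0" by simp
    from H[OF this] show "\<exists>y. y \<in> Bset k \<and> rkhs_norm k (\<lambda>x. y x - b x) < inverse (real (Suc n)) \<and>
          (\<exists>x. \<bar>Wop eps k V y x - Wop eps k V b x\<bar> \<ge> e)" by blast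
  qed
  then obtain bs where bs0: "\<forall>n. bs n \<in> Bset k \<and> rkhs_norm k (\<lambda>x. bs n x - b x) < inverse (real (Suc n)) \<and>
          (\<exists>x. \<bar>Wop eps k V (bs n) x - Wop eps k V b x\<bar> \<ge> e)" by blast
  then have bs: "\<And>n. bs n \<in> Bset k" "\<And>n. rkhs_norm k (\<lambda>x. bs n x - b x) < inverse (real (Suc n))" by auto
  have "\<exists>xs. \<forall>n. \<bar>Wop eps k V (bs n) (xs n) - Wop eps k V b (xs n)\<bar> \<ge> e"
    by (rule choice) (use bs0 in auto)
  then obtain xs where xs: "\<And>n. \<bar>Wop eps k V (bs n) (xs n) - Wop eps k V b (xs n)\<bar> \<ge> e" by blast
  define \<sigma> where "\<sigma> n = Hc_inv k (bs n)" for n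
  define \<sigma>0 where "\<sigma>0 = Hc_inv k b"
  have B0: "pos_meas \<sigma>0" "b = Hc k \<sigma>0" "measure \<sigma>0 UNIV \<le> 1 / mm" "b \<in> rkhs k"
    using Bset_D[OF b] unfolding \<sigma>0_def by auto
  have Bn: "pos_meas (\<sigma> n)" "bs n = Hc k (\<sigma> n)" "measure (\<sigma> n) UNIV \<le> 1 / mm" "bs n \<in> rkhs k" for n
    using Bset_D[OF bs(1)] unfolding \<sigma>_def by auto
  have close: "\<bar>bs n y - b y\<bar> < inverse (real (Suc n))" for n y
    using rkhs_bound[OF rkhs_diff[OF Bn(4)[of n] B0(4)], of y] bs(2)[of n] by simp
  have pw: "(\<lambda>n. bs n y) \<longlonglongrightarrow> b y" for y
  proof -
    have "(\<lambda>n. bs n y - b y) \<longlonglongrightarrow> 0"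
    proof (rule Lim_null_comparison[OF always_eventually LIMSEQ_inverse_real_of_nat], rule allI)
      fix n show "norm (bs n y - b y) \<le> inverse (real (Suc n))" using close[of n y] by simp
    qed
    then show ?thesis by (simp add: LIM_zero_iff)
  qed
  have wc: "(\<lambda>n. integral\<^sup>L (\<sigma> n) g) \<longlonglongrightarrow> integral\<^sup>L \<sigma>0 g" if "continuous_on UNIV g" for g :: "'a \<Rightarrow> real"
  proof (rule weak_conv_lim[OF Bn(1) Bn(3) B0(1) B0(3) _ that])
    fix y
    have "Hc k (\<sigma> n) y = bs n y" for n using Bn(2)[of n] by simp
    then show "(\<lambda>n. Hc k (\<sigma> n) y) \<longlonglongrightarrow> Hc k \<sigma>0 y" using pw[of y] B0(2) by simp
  qed
  obtain l r where r: "strict_mono r" "(xs \<circ> r) \<longlonglongrightarrow> l"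
    using compact_imp_seq_compact[OF cpt] unfolding seq_compact_def by blast
  have wcr: "(\<lambda>n. integral\<^sup>L (\<sigma> (r n)) g) \<longlonglongrightarrow> integral\<^sup>L \<sigma>0 g" if "continuous_on UNIV g" for g :: "'a \<Rightarrow> real"
    using LIMSEQ_subseq_LIMSEQ[OF wc[OF that] r(1)] by (simp add: comp_def)
  have T2: "(\<lambda>n. integral\<^sup>L (\<sigma> (r n)) (\<lambda>x. V x * k x (xs (r n))) - integral\<^sup>L \<sigma>0 (\<lambda>x. V x * k x (xs (r n)))) \<longlonglongrightarrow> 0"
    by (rule uwc[OF VGc Bn(1) Bn(3) B0(1) B0(3) wcr]) (use r(2) in \<open>auto simp: comp_def\<close>)
  obtain BV where BV: "\<And>x. \<bar>V x\<bar> \<le> BV" using cont_bounded[OF cpt Vc] by blast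
  have T1: "(\<lambda>n. V (xs (r n)) * (bs (r n) (xs (r n)) - b (xs (r n)))) \<longlonglongrightarrow> 0"
  proof (rule Lim_null_comparison)
    have "(\<lambda>n. inverse (real (Suc (r n)))) \<longlonglongrightarrow> 0"
      using LIMSEQ_subseq_LIMSEQ[OF LIMSEQ_inverse_real_of_nat r(1)] by (simp add: comp_def)
    then show "(\<lambda>n. BV * inverse (real (Suc (r n)))) \<longlonglongrightarrow> 0" using tendsto_mult_right_zero by blast
    show "\<forall>\<^sub>F n in sequentially. norm (V (xs (r n)) * (bs (r n) (xs (r n)) - b (xs (r n)))) \<le> BV * inverse (real (Suc (r n)))"
    proof (rule always_eventually, rule allI)
      fix n
      have "\<bar>V (xs (r n))\<bar> * \<bar>bs (r n) (xs (r n)) - b (xs (r n))\<bar> \<le> BV * inverse (real (Suc (r n)))"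
      proof (rule mult_mono)
        show "\<bar>bs (r n) (xs (r n)) - b (xs (r n))\<bar> \<le> inverse (real (Suc (r n)))"
          using close[of "r n" "xs (r n)"] by (rule less_imp_le)
        show "0 \<le> BV" using BV[of "xs 0"] abs_ge_zero order_trans by blast
      qed (auto simp: BV)
      then show "norm (V (xs (r n)) * (bs (r n) (xs (r n)) - b (xs (r n)))) \<le> BV * inverse (real (Suc (r n)))"
        by (simp add: abs_mult)
    qed
  qed
  have "(\<lambda>n. 2 / eps * (V (xs (r n)) * (bs (r n) (xs (r n)) - b (xs (r n))) -
      (integral\<^sup>L (\<sigma> (r n)) (\<lambda>x. V x * k x (xs (r n))) - integral\<^sup>L \<sigma>0 (\<lambda>x. V x * k x (xs (r n)))))) \<longlonglongrightarrow> 2 / eps * (0 - 0)"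
    by (intro tendsto_mult tendsto_const tendsto_diff T1 T2)
  moreover have "Wop eps k V (bs (r n)) (xs (r n)) - Wop eps k V b (xs (r n)) =
      2 / eps * (V (xs (r n)) * (bs (r n) (xs (r n)) - b (xs (r n))) -
      (integral\<^sup>L (\<sigma> (r n)) (\<lambda>x. V x * k x (xs (r n))) - integral\<^sup>L \<sigma>0 (\<lambda>x. V x * k x (xs (r n)))))" for n
    unfolding Wop_def Vstar_def \<sigma>_def \<sigma>0_def by (simp add: algebra_simps)
  ultimately have "(\<lambda>n. Wop eps k V (bs (r n)) (xs (r n)) - Wop eps k V b (xs (r n))) \<longlonglongrightarrow> 0" by simp
  then obtain N where "\<forall>n\<ge>N. norm (Wop eps k V (bs (r n)) (xs (r n)) - Wop eps k V b (xs (r n)) - 0) < e"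
    using LIMSEQ_D e by blast
  then show False using xs[of "r N"] by auto
qed

lemma part3:
  assumes bsp: "\<And>n. bs n \<in> Bset k \<and> ps n \<in> Ptilde k (bs n)" and b: "b \<in> rkhs k"
    and pc: "continuous_on UNIV p"
    and nl: "(\<lambda>n. rkhs_norm k (\<lambda>x. bs n x - b x)) \<longlonglongrightarrow> 0"
    and ul: "uniform_limit UNIV ps p sequentially"
  shows "b \<in> Bset k \<and> p \<in> Ptilde k b"
proof -
  define \<sigma> where "\<sigma> n = Hc_inv k (bs n)" for n
  have Bn: "pos_meas (\<sigma> n)" "bs n = Hc k (\<sigma> n)" "measure (\<sigma> n) UNIV \<le> 1 / mm" "bs n \<in> rkhs k"
    "rkhs_norm k (bs n) = 1" for n
    using Bset_D[of "bs n"] bsp[of n] unfolding \<sigma>_def by auto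
  have pw: "(\<lambda>n. bs n y) \<longlonglongrightarrow> b y" for y
  proof -
    have "(\<lambda>n. bs n y - b y) \<longlonglongrightarrow> 0"
    proof (rule Lim_null_comparison[OF always_eventually nl], rule allI)
      fix n show "norm (bs n y - b y) \<le> rkhs_norm k (\<lambda>x. bs n x - b x)"
        using rkhs_bound[OF rkhs_diff[OF Bn(4)[of n] b], of y] by simp
    qed
    then show ?thesis by (simp add: LIM_zero_iff)
  qed
  have hc: "(\<lambda>n. Hc k (\<sigma> n) y) \<longlonglongrightarrow> b y" for y
  proof -
    have "Hc k (\<sigma> n) y = bs n y" for n using Bn(2)[of n] by simp
    then show ?thesis using pw[of y] by simp
  qed
  define \<Lambda> where "\<Lambda> g = lim (\<lambda>n. integral\<^sup>L (\<sigma> n) g)" for g :: "'a \<Rightarrow> real"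
  have \<Lambda>: "(\<lambda>n. integral\<^sup>L (\<sigma> n) g) \<longlonglongrightarrow> \<Lambda> g" if "continuous_on UNIV g" for g :: "'a \<Rightarrow> real"
    unfolding \<Lambda>_def using weak_conv_ex[OF Bn(1) Bn(3) hc that] by (simp add: convergent_LIMSEQ_iff)
  have "\<exists>M. finite_measure M \<and> sets M = sets borel \<and>
    (\<forall>g. continuous_on UNIV g \<longrightarrow> integrable M g \<and> integral\<^sup>L M g = \<Lambda> g)"
  proof (rule riesz_cpt[OF cpt])
    fix f g :: "'a \<Rightarrow> real" assume fc: "continuous_on UNIV f" and gc: "continuous_on UNIV g"
    have "(\<lambda>n. integral\<^sup>L (\<sigma> n) (\<lambda>x. f x + g x)) \<longlonglongrightarrow> \<Lambda> (\<lambda>x. f x + g x)"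
      by (rule \<Lambda>) (intro continuous_intros fc gc)
    moreover have "(\<lambda>n. integral\<^sup>L (\<sigma> n) (\<lambda>x. f x + g x)) \<longlonglongrightarrow> \<Lambda> f + \<Lambda> g"
    proof -
      have "integral\<^sup>L (\<sigma> n) (\<lambda>x. f x + g x) = integral\<^sup>L (\<sigma> n) f + integral\<^sup>L (\<sigma> n) g" for n
        by (rule Bochner_Integration.integral_add) (intro pm_integrable[OF cpt Bn(1)] fc gc)+
      then show ?thesis using tendsto_add[OF \<Lambda>[OF fc] \<Lambda>[OF gc]] by simp
    qed
    ultimately show "\<Lambda> (\<lambda>x. f x + g x) = \<Lambda> f + \<Lambda> g" by (rule LIMSEQ_unique)
  next
    fix f :: "'a \<Rightarrow> real" and a :: real assume fc: "continuous_on UNIV f"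
    have "(\<lambda>n. integral\<^sup>L (\<sigma> n) (\<lambda>x. a * f x)) \<longlonglongrightarrow> \<Lambda> (\<lambda>x. a * f x)"
      by (rule \<Lambda>) (intro continuous_intros fc)
    moreover have "(\<lambda>n. integral\<^sup>L (\<sigma> n) (\<lambda>x. a * f x)) \<longlonglongrightarrow> a * \<Lambda> f"
      using tendsto_mult[OF tendsto_const \<Lambda>[OF fc], of a] by simp
    ultimately show "\<Lambda> (\<lambda>x. a * f x) = a * \<Lambda> f" by (rule LIMSEQ_unique)
  next
    fix f :: "'a \<Rightarrow> real" assume fc: "continuous_on UNIV f" and f0: "\<And>x. f x \<ge> 0"
    show "\<Lambda> f \<ge> 0" by (rule LIMSEQ_le_const[OF \<Lambda>[OF fc]]) (use f0 in \<open>auto intro: integral_nonneg\<close>)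
  qed
  then obtain \<mu> where \<mu>: "finite_measure \<mu>" "sets \<mu> = sets borel"
    "\<And>g. continuous_on UNIV g \<Longrightarrow> integral\<^sup>L \<mu> g = \<Lambda> g" by blast
  have pm: "pos_meas \<mu>" unfolding pos_meas_def using \<mu> by simp
  have hb: "Hc k \<mu> = b"
  proof
    fix y
    have "Hc k \<mu> y = \<Lambda> (\<lambda>x. k x y)" unfolding Hc_def by (rule \<mu>(3)[OF cont_fst[OF kcont]])
    moreover have "(\<lambda>n. integral\<^sup>L (\<sigma> n) (\<lambda>x. k x y)) \<longlonglongrightarrow> \<Lambda> (\<lambda>x. k x y)" by (rule \<Lambda>[OF cont_fst[OF kcont]])
    moreover have "(\<lambda>n. integral\<^sup>L (\<sigma> n) (\<lambda>x. k x y)) \<longlonglongrightarrow> b y" using hc[of y] unfolding Hc_def .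
    ultimately show "Hc k \<mu> y = b y" using LIMSEQ_unique by metis
  qed
  have norm1: "rkhs_norm k b = 1"
  proof (rule antisym)
    have le: "rkhs_norm k b \<le> 1 + rkhs_norm k (\<lambda>x. bs n x - b x)" for n
      using rkhs_tri[OF b Bn(4)[of n]] rkhs_swap[OF b Bn(4)[of n]] Bn(5)[of n] by simp
    have "(\<lambda>n. 1 + rkhs_norm k (\<lambda>x. bs n x - b x)) \<longlonglongrightarrow> 1 + 0" by (intro tendsto_add tendsto_const nl)
    then show "rkhs_norm k b \<le> 1" using le by (intro LIMSEQ_le_const) auto
    have ge: "1 - rkhs_norm k (\<lambda>x. bs n x - b x) \<le> rkhs_norm k b" for n
      using rkhs_tri[OF Bn(4)[of n] b] Bn(5)[of n] by simp
    have "(\<lambda>n. 1 - rkhs_norm k (\<lambda>x. bs n x - b x)) \<longlonglongrightarrow> 1 - 0" by (intro tendsto_diff tendsto_const nl)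
    then show "1 \<le> rkhs_norm k b" using ge by (intro LIMSEQ_le_const2) auto
  qed
  have bB: "b \<in> Bset k" unfolding Bset_def using pm hb b norm1 by auto
  have inv: "Hc_inv k b = \<mu>" using Hc_inv_eq[OF pm] hb by simp
  have pl: "(\<lambda>n. ps n x) \<longlonglongrightarrow> p x" for x by (rule tendsto_uniform_limitI[OF ul]) simp
  have psn: "ps n \<in> Ptilde k (bs n)" for n using bsp by auto
  have pneg: "p x \<le> 0" for x
    by (rule LIMSEQ_le_const2[OF pl]) (use psn in \<open>auto simp: Ptilde_def\<close>)
  have psupp: "p x = 0" if xs: "x \<in> meas_supp \<mu>" for x
  proof (rule ccontr)
    assume "p x \<noteq> 0"
    then have px: "p x < 0" using pneg[of x] by simp
    define \<delta> where "\<delta> = - p x"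
    have \<delta>: "\<delta> > 0" unfolding \<delta>_def using px by simp
    obtain r where r: "r > 0" "\<And>z. dist z x < r \<Longrightarrow> dist (p z) (p x) < \<delta> / 2"
      using pc \<delta> unfolding continuous_on_iff by (metis UNIV_I half_gt_zero)
    have "\<forall>\<^sub>F n in sequentially. \<forall>z\<in>UNIV. dist (ps n z) (p z) < \<delta> / 2"
      using ul \<delta> unfolding uniform_limit_iff by (meson half_gt_zero)
    then obtain N where N: "\<And>n z. n \<ge> N \<Longrightarrow> dist (ps n z) (p z) < \<delta> / 2"
      unfolding eventually_sequentially by blast
    have zero: "emeasure (\<sigma> n) (cball x (r/2)) = 0" if n: "n \<ge> N" for n
    proof (rule null_near[OF Bn(1) r(1)])
      fix z assume "z \<in> ball x r"
      then have "dist z x < r" by (simp add: dist_commute)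
      then have "\<bar>p z - p x\<bar> < \<delta> / 2" using r(2)[of z] unfolding dist_real_def by simp
      then have "p z < - \<delta> / 2" unfolding \<delta>_def by linarith
      moreover have "\<bar>ps n z - p z\<bar> < \<delta> / 2" using N[OF n, of z] unfolding dist_real_def by simp
      ultimately have "ps n z < 0" by linarith
      moreover have "\<forall>w\<in>meas_supp (\<sigma> n). ps n w = 0" using psn[of n] unfolding Ptilde_def \<sigma>_def by auto
      ultimately show "z \<notin> meas_supp (\<sigma> n)" by auto
    qed
    define f where "f z = max 0 (1 - 2 * dist z x / r)" for z
    have fc: "continuous_on UNIV f" unfolding f_def by (intro continuous_intros) (use r(1) in auto)
    have fle: "f z \<le> indicator (cball x (r/2)) z" for z
      unfolding f_def using r(1) by (auto simp: indicator_def field_simps dist_commute)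
    have fge: "(1/2) * indicator (ball x (r/4)) z \<le> f z" for z
      unfolding f_def using r(1) by (auto simp: indicator_def field_simps dist_commute)
    have "\<Lambda> f \<le> 0"
    proof (rule LIMSEQ_le_const2[OF \<Lambda>[OF fc]], intro exI allI impI)
      fix n assume n: "n \<ge> N"
      have f: "finite_measure (\<sigma> n)" "sets (\<sigma> n) = sets borel" using pos_meas_D[OF Bn(1)] by auto
      have "integral\<^sup>L (\<sigma> n) f \<le> integral\<^sup>L (\<sigma> n) (indicator (cball x (r/2)) :: 'a \<Rightarrow> real)"
        using fle pm_integrable[OF cpt Bn(1) fc] f
        by (intro integral_mono) (auto intro!: integrable_real_indicator simp: finite_measure.emeasure_finite less_top[symmetric])
      also have "\<dots> = measure (\<sigma> n) (cball x (r/2))" using f by (simp add: sets_eq_imp_space_eq[of _ borel])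
      also have "\<dots> = 0" using zero[OF n] by (simp add: measure_def)
      finally show "integral\<^sup>L (\<sigma> n) f \<le> 0" .
    qed
    moreover have "\<Lambda> f > 0"
    proof -
      have f: "finite_measure \<mu>" "sets \<mu> = sets borel" using \<mu> by auto
      have "emeasure \<mu> (ball x (r/4)) > 0" using xs r(1) unfolding meas_supp_def by simp
      then have m: "measure \<mu> (ball x (r/4)) > 0"
        using f by (simp add: finite_measure.emeasure_eq_measure)
      have "(1/2) * measure \<mu> (ball x (r/4)) = integral\<^sup>L \<mu> (\<lambda>z. (1/2) * indicator (ball x (r/4)) z)"
        using f by (simp add: sets_eq_imp_space_eq[of _ borel])
      also have "\<dots> \<le> integral\<^sup>L \<mu> f"
        using fge pm_integrable[OF cpt pm fc] f
        by (intro integral_mono) (auto intro!: integrable_real_indicator integrable_mult_right simp: finite_measure.emeasure_finite less_top[symmetric])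
      also have "\<dots> = \<Lambda> f" by (rule \<mu>(3)[OF fc])
      finally show ?thesis using m by simp
    qed
    ultimately show False by simp
  qed
  have "p \<in> Ptilde k b" unfolding Ptilde_def inv using pc pneg psupp by auto
  then show ?thesis using bB by simp
qed

end

theorem mainTheorem9:
  fixes c :: "'a::metric_space \<Rightarrow> 'a \<Rightarrow> real" and eps :: real and V :: "'a \<Rightarrow> real"
  assumes "compact (UNIV :: 'a set)"
    and "eps > 0"
    and "continuous_on UNIV (\<lambda>(x, y). c x y)"
    and "\<And>x y. c x y = c y x"
    and "\<And>x y. c x y \<ge> 0"
    and "pos_def_kernel (kc c eps)"
    and "universal_kernel (kc c eps)"
    and "continuous_on UNIV V"
  shows "(\<forall>b\<in>Bset (kc c eps). continuous_on UNIV (Wop eps (kc c eps) V b))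
    \<and> (\<forall>b\<in>Bset (kc c eps). \<forall>e>0. \<exists>d>0. \<forall>b'\<in>Bset (kc c eps).
          rkhs_norm (kc c eps) (\<lambda>x. b' x - b x) < d \<longrightarrow>
          (\<forall>x. \<bar>Wop eps (kc c eps) V b' x - Wop eps (kc c eps) V b x\<bar> < e))
    \<and> (\<forall>bs ps b p. (\<forall>n. bs n \<in> Bset (kc c eps) \<and> ps n \<in> Ptilde (kc c eps) (bs n))
          \<longrightarrow> b \<in> rkhs (kc c eps) \<longrightarrow> continuous_on UNIV p
          \<longrightarrow> (\<lambda>n. rkhs_norm (kc c eps) (\<lambda>x. bs n x - b x)) \<longlonglongrightarrow> 0
          \<longrightarrow> uniform_limit UNIV ps p sequentially
          \<longrightarrow> b \<in> Bset (kc c eps) \<and> p \<in> Ptilde (kc c eps) b)"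
proof -
  interpret mainctx c eps V using assms by unfold_locales
  show ?thesis
  proof (intro conjI ballI allI impI)
    fix b assume "b \<in> Bset (kc c eps)"
    then show "continuous_on UNIV (Wop eps (kc c eps) V b)" by (rule part1)
  next
    fix b :: "'a \<Rightarrow> real" and e :: real assume "b \<in> Bset (kc c eps)" "e > 0"
    then show "\<exists>d>0. \<forall>b'\<in>Bset (kc c eps). rkhs_norm (kc c eps) (\<lambda>x. b' x - b x) < d \<longrightarrow>
          (\<forall>x. \<bar>Wop eps (kc c eps) V b' x - Wop eps (kc c eps) V b x\<bar> < e)" by (rule part2)
  next
    fix bs ps b p
    assume "\<forall>n. bs n \<in> Bset (kc c eps) \<and> ps n \<in> Ptilde (kc c eps) (bs n)" "b \<in> rkhs (kc c eps)"
      "continuous_on UNIV p" "(\<lambda>n. rkhs_norm (kc c eps) (\<lambda>x. bs n x - b x)) \<longlonglongrightarrow> 0"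
      "uniform_limit UNIV ps p sequentially"
    then show "b \<in> Bset (kc c eps)" "p \<in> Ptilde (kc c eps) b" using part3 by blast+
  qed
qed

end
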